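(* Let $H_1,H_2$ be Hermitian matrices, $f_1,f_2:[0,T]\to\mathbb{R}$ twice continuously differentiable, $H(t)=f_1(t)H_1+f_2(t)H_2$, $L\ge1$ an integer, and for $X\in\{(s,1),(g,1),(s,2),(g,2)\}$ let $\mathcal{U}_X=U_X(T,\tfrac{(L-1)T}{L})\cdots U_X(\tfrac{2T}{L},\tfrac{T}{L})U_X(\tfrac TL,0)$ (product of $L$ steps of size $h=T/L$). Then $$\|\mathcal U_{s,1}-U(T,0)\|\le\alpha_{s,1}\tfrac{T^2}{L}+\beta_{s,1}\tfrac{T^3}{L^2},\qquad \|\mathcal U_{g,1}-U(T,0)\|\le\alpha_{g,1}\tfrac{T^2}{L},$$ $$\|\mathcal U_{s,2}-U(T,0)\|\le\alpha_{s,2}\tfrac{T^3}{L^2}+\beta_{s,2}\tfrac{T^4}{L^3}+\gamma_{s,2}\tfrac{T^5}{L^4},\qquad \|\mathcal U_{g,2}-U(T,0)\|\le\alpha_{g,2}\tfrac{T^3}{L^2}.$$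
   Context: $\|\cdot\|$ on matrices is the operator 2-norm; $\|f\|=\|f\|_\infty=\sup_{t\in[0,T]}|f(t)|$. $U(t,s)$ is the exact evolution: $\partial_tU(t,s)=-\mathrm{i} H(t)U(t,s)$, $U(s,s)=I$. Trotter steps: $U_{s,1}(t+h,t)=\exp(-\mathrm{i} f_2(t+h)H_2h)\exp(-\mathrm{i} f_1(t+h)H_1h)$; $U_{g,1}(t+h,t)=\exp(-\mathrm{i}\int_t^{t+h}f_2(s)ds\,H_2)\exp(-\mathrm{i}\int_t^{t+h}f_1(s)ds\,H_1)$; $U_{s,2}(t+h,t)=\exp(-\frac{\mathrm{i} h}{2}f_1(t+h/2)H_1)\exp(-\mathrm{i} hf_2(t+h/2)H_2)\exp(-\frac{\mathrm{i} h}{2}f_1(t+h/2)H_1)$; $U_{g,2}(t+h,t)=\exp(-\mathrm{i}\int_{t+h/2}^{t+h}f_1(s)ds\,H_1)\exp(-\mathrm{i}\int_t^{t+h}f_2(s)ds\,H_2)\exp(-\mathrm{i}\int_t^{t+h/2}f_1(s)ds\,H_1)$. Constants: $\alpha_{s,1}=\frac12\|f_1'\|\|H_1\|+\frac12\|f_2'\|\|H_2\|+\frac12\|f_1\|\|f_2\|\|[H_1,H_2]\|$; $\beta_{s,1}=\frac16\|f_1\|\|f_2'\|\|[H_1,H_2]\|$; $\alpha_{g,1}=\frac12\|f_1\|\|f_2\|\|[H_1,H_2]\|$; $\alpha_{s,2}=\frac{7}{24}\|f_1''\|\|H_1\|+\frac1{12}\|f_1'\|\|f_2\|\|H_1\|+\frac7{24}\|f_2''\|\|H_2\|+\frac16(\|f_1'\|\|f_2\|+\|f_1\|\|f_2'\|)\|[H_1,H_2]\|+\frac1{24}\|f_1\|^2\|f_2\|\|[H_1,[H_1,H_2]]\|+\frac1{12}\|f_1\|\|f_2\|^2\|[H_2,[H_1,H_2]]\|$;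 $\beta_{s,2}=\frac1{64}\|f_1'\|\|f_2'\|\|H_1\|+(\frac1{192}\|f_1\|\|f_2''\|+\frac1{192}\|f_1''\|\|f_2\|+\frac1{48}\|f_1'\|\|f_2'\|)\|[H_1,H_2]\|+\frac1{96}\|f_1\|\|f_1'\|\|f_2\|\|[H_1,[H_1,H_2]]\|+\frac1{48}\|f_1\|\|f_2\|\|f_2'\|\|[H_2,[H_1,H_2]]\|$; $\gamma_{s,2}=\frac1{960}\|f_1'\|^2\|f_2\|\|[H_1,[H_1,H_2]]\|+\frac1{480}\|f_1\|\|f_2'\|^2\|[H_2,[H_1,H_2]]\|$; $\alpha_{g,2}=(\frac7{12}\|f_1\|\|f_2'\|+\frac{11}{24}\|f_1'\|\|f_2\|)\|[H_1,H_2]\|+\frac38\|f_1\|^2\|f_2\|\|[H_1,[H_1,H_2]]\|+\frac1{12}\|f_1\|\|f_2\|^2\|[H_2,[H_2,H_1]]\|$. *)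

theory Defs
  imports "HOL-Analysis.Analysis"
begin

text \<open>Complex n x n matrices are modelled as complex^'n^'n (dimension = CARD('n)).\<close>

definition cmat :: "complex \<Rightarrow> complex^'n^'m \<Rightarrow> complex^'n^'m" where
  "cmat c A = (\<chi> i j. c * A $ i $ j)"

definition hermitian :: "complex^'n^'n \<Rightarrow> bool" where
  "hermitian A \<longleftrightarrow> (\<forall>i j. A $ i $ j = cnj (A $ j $ i))"

text \<open>Operator 2-norm: operator norm w.r.t. the Euclidean norm on complex^'n.\<close>
definition opn :: "complex^'n^'n \<Rightarrow> real" where
  "opn A = onorm (\<lambda>x. A *v x)"

fun mpow :: "complex^'n^'n \<Rightarrow> nat \<Rightarrow> complex^'n^'n" where
  "mpow A 0 = mat 1"
| "mpow A (Suc k) = A ** mpow A k"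

definition mexp :: "complex^'n^'n \<Rightarrow> complex^'n^'n" where
  "mexp A = (\<Sum>k. (1 / fact k) *\<^sub>R mpow A k)"

definition comm :: "complex^'n^'n \<Rightarrow> complex^'n^'n \<Rightarrow> complex^'n^'n" where
  "comm A B = A ** B - B ** A"

definition supn :: "real \<Rightarrow> (real \<Rightarrow> real) \<Rightarrow> real" where
  "supn T f = (SUP t\<in>{0..T}. \<bar>f t\<bar>)"

text \<open>Trotter steps U_X(t+h,t).\<close>
definition Us1 where
  "Us1 f1 f2 H1 H2 h t =
     mexp (cmat (- \<i> * complex_of_real (f2 (t+h) * h)) H2)
  ** mexp (cmat (- \<i> * complex_of_real (f1 (t+h) * h)) H1)"

definition Ug1 where
  "Ug1 f1 f2 H1 H2 h t =
     mexp (cmat (- \<i> * complex_of_real (integral {t..t+h} f2)) H2)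
  ** mexp (cmat (- \<i> * complex_of_real (integral {t..t+h} f1)) H1)"

definition Us2 where
  "Us2 f1 f2 H1 H2 h t =
     mexp (cmat (- \<i> * complex_of_real (h / 2 * f1 (t + h/2))) H1)
  ** mexp (cmat (- \<i> * complex_of_real (h * f2 (t + h/2))) H2)
  ** mexp (cmat (- \<i> * complex_of_real (h / 2 * f1 (t + h/2))) H1)"

definition Ug2 where
  "Ug2 f1 f2 H1 H2 h t =
     mexp (cmat (- \<i> * complex_of_real (integral {t+h/2..t+h} f1)) H1)
  ** mexp (cmat (- \<i> * complex_of_real (integral {t..t+h} f2)) H2)
  ** mexp (cmat (- \<i> * complex_of_real (integral {t..t+h/2} f1)) H1)"

fun stepprod :: "(real \<Rightarrow> complex^'n^'n) \<Rightarrow> real \<Rightarrow> nat \<Rightarrow> complex^'n^'n" where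
  "stepprod S h 0 = mat 1"
| "stepprod S h (Suc k) = S (real k * h) ** stepprod S h k"

definition alpha_s1 :: "real \<Rightarrow> (real\<Rightarrow>real) \<Rightarrow> (real\<Rightarrow>real) \<Rightarrow> (real\<Rightarrow>real) \<Rightarrow> (real\<Rightarrow>real) \<Rightarrow> (real\<Rightarrow>real) \<Rightarrow> (real\<Rightarrow>real) \<Rightarrow> complex^'n^'n \<Rightarrow> complex^'n^'n \<Rightarrow> real" where
  "alpha_s1 T f1 f1' f1'' f2 f2' f2'' H1 H2 =
     1/2 * supn T f1' * opn H1 + 1/2 * supn T f2' * opn H2
   + 1/2 * supn T f1 * supn T f2 * opn (comm H1 H2)"

definition beta_s1 :: "real \<Rightarrow> (real\<Rightarrow>real) \<Rightarrow> (real\<Rightarrow>real) \<Rightarrow> (real\<Rightarrow>real) \<Rightarrow> (real\<Rightarrow>real) \<Rightarrow> (real\<Rightarrow>real) \<Rightarrow> (real\<Rightarrow>real) \<Rightarrow> complex^'n^'n \<Rightarrow> complex^'n^'n \<Rightarrow> real" where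
  "beta_s1 T f1 f1' f1'' f2 f2' f2'' H1 H2 =
     1/6 * supn T f1 * supn T f2' * opn (comm H1 H2)"

definition alpha_g1 :: "real \<Rightarrow> (real\<Rightarrow>real) \<Rightarrow> (real\<Rightarrow>real) \<Rightarrow> (real\<Rightarrow>real) \<Rightarrow> (real\<Rightarrow>real) \<Rightarrow> (real\<Rightarrow>real) \<Rightarrow> (real\<Rightarrow>real) \<Rightarrow> complex^'n^'n \<Rightarrow> complex^'n^'n \<Rightarrow> real" where
  "alpha_g1 T f1 f1' f1'' f2 f2' f2'' H1 H2 =
     1/2 * supn T f1 * supn T f2 * opn (comm H1 H2)"

definition alpha_s2 :: "real \<Rightarrow> (real\<Rightarrow>real) \<Rightarrow> (real\<Rightarrow>real) \<Rightarrow> (real\<Rightarrow>real) \<Rightarrow> (real\<Rightarrow>real) \<Rightarrow> (real\<Rightarrow>real) \<Rightarrow> (real\<Rightarrow>real) \<Rightarrow> complex^'n^'n \<Rightarrow> complex^'n^'n \<Rightarrow> real" where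
  "alpha_s2 T f1 f1' f1'' f2 f2' f2'' H1 H2 =
     7/24 * supn T f1'' * opn H1 + 1/12 * supn T f1' * supn T f2 * opn H1
   + 7/24 * supn T f2'' * opn H2
   + 1/6 * (supn T f1' * supn T f2 + supn T f1 * supn T f2') * opn (comm H1 H2)
   + 1/24 * (supn T f1)^2 * supn T f2 * opn (comm H1 (comm H1 H2))
   + 1/12 * supn T f1 * (supn T f2)^2 * opn (comm H2 (comm H1 H2))"

definition beta_s2 :: "real \<Rightarrow> (real\<Rightarrow>real) \<Rightarrow> (real\<Rightarrow>real) \<Rightarrow> (real\<Rightarrow>real) \<Rightarrow> (real\<Rightarrow>real) \<Rightarrow> (real\<Rightarrow>real) \<Rightarrow> (real\<Rightarrow>real) \<Rightarrow> complex^'n^'n \<Rightarrow> complex^'n^'n \<Rightarrow> real" where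
  "beta_s2 T f1 f1' f1'' f2 f2' f2'' H1 H2 =
     1/64 * supn T f1' * supn T f2' * opn H1
   + (1/192 * supn T f1 * supn T f2'' + 1/192 * supn T f1'' * supn T f2
      + 1/48 * supn T f1' * supn T f2') * opn (comm H1 H2)
   + 1/96 * supn T f1 * supn T f1' * supn T f2 * opn (comm H1 (comm H1 H2))
   + 1/48 * supn T f1 * supn T f2 * supn T f2' * opn (comm H2 (comm H1 H2))"

definition gamma_s2 :: "real \<Rightarrow> (real\<Rightarrow>real) \<Rightarrow> (real\<Rightarrow>real) \<Rightarrow> (real\<Rightarrow>real) \<Rightarrow> (real\<Rightarrow>real) \<Rightarrow> (real\<Rightarrow>real) \<Rightarrow> (real\<Rightarrow>real) \<Rightarrow> complex^'n^'n \<Rightarrow> complex^'n^'n \<Rightarrow> real" where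
  "gamma_s2 T f1 f1' f1'' f2 f2' f2'' H1 H2 =
     1/960 * (supn T f1')^2 * supn T f2 * opn (comm H1 (comm H1 H2))
   + 1/480 * supn T f1 * (supn T f2')^2 * opn (comm H2 (comm H1 H2))"

definition alpha_g2 :: "real \<Rightarrow> (real\<Rightarrow>real) \<Rightarrow> (real\<Rightarrow>real) \<Rightarrow> (real\<Rightarrow>real) \<Rightarrow> (real\<Rightarrow>real) \<Rightarrow> (real\<Rightarrow>real) \<Rightarrow> (real\<Rightarrow>real) \<Rightarrow> complex^'n^'n \<Rightarrow> complex^'n^'n \<Rightarrow> real" where
  "alpha_g2 T f1 f1' f1'' f2 f2' f2'' H1 H2 =
     (7/12 * supn T f1 * supn T f2' + 11/24 * supn T f1' * supn T f2) * opn (comm H1 H2)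
   + 3/8 * (supn T f1)^2 * supn T f2 * opn (comm H1 (comm H1 H2))
   + 1/12 * supn T f1 * (supn T f2)^2 * opn (comm H2 (comm H2 H1))"

end

theory Submission
  imports Defs
begin

typedef (overloaded) ('n::finite) endo = "UNIV :: ((complex^'n) \<Rightarrow>\<^sub>L (complex^'n)) set" by simp

setup_lifting type_definition_endo

instantiation endo :: (finite) real_normed_vector
begin
lift_definition norm_endo :: "'a endo \<Rightarrow> real" is "norm :: ((complex^'a) \<Rightarrow>\<^sub>L (complex^'a)) \<Rightarrow> real" .
lift_definition minus_endo :: "'a endo \<Rightarrow> 'a endo \<Rightarrow> 'a endo" is "(-)" .
lift_definition plus_endo :: "'a endo \<Rightarrow> 'a endo \<Rightarrow> 'a endo" is "(+)" .
lift_definition uminus_endo :: "'a endo \<Rightarrow> 'a endo" is "uminus" .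
lift_definition zero_endo :: "'a endo" is "0" .
lift_definition scaleR_endo :: "real \<Rightarrow> 'a endo \<Rightarrow> 'a endo" is "scaleR" .
definition dist_endo :: "'a endo \<Rightarrow> 'a endo \<Rightarrow> real" where "dist_endo a b = norm (a - b)"
definition sgn_endo :: "'a endo \<Rightarrow> 'a endo" where "sgn_endo x = scaleR (inverse (norm x)) x"
definition uniformity_endo :: "('a endo \<times> 'a endo) filter" where
  "uniformity_endo = (INF e\<in>{0 <..}. principal {(x, y). dist x y < e})"
definition open_endo :: "'a endo set \<Rightarrow> bool" where
  "open_endo S = (\<forall>x\<in>S. \<forall>\<^sub>F (x', y) in uniformity. x' = x \<longrightarrow> y \<in> S)"
instance
  apply standard
  unfolding dist_endo_def open_endo_def sgn_endo_def uniformity_endo_def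
  apply (rule refl | (transfer, force simp: norm_triangle_ineq algebra_simps))+
  done
end

instantiation endo :: (finite) real_normed_algebra_1
begin
lift_definition one_endo :: "'a endo" is "id_blinfun" .
lift_definition times_endo :: "'a endo \<Rightarrow> 'a endo \<Rightarrow> 'a endo" is "(o\<^sub>L)" .
instance
  apply intro_classes
  apply (transfer; auto intro!: blinfun_eqI simp: blinfun.add_left blinfun.add_right blinfun.scaleR_left blinfun.scaleR_right norm_blinfun_compose)+
    apply (metis norm_blinfun_id norm_zero zero_neq_one)
   apply (transfer, rule norm_blinfun_compose)
  apply (transfer, rule norm_blinfun_id)
  done
end


instance endo :: (finite) banach
proof
  fix X :: "nat \<Rightarrow> 'a endo" assume "Cauchy X"
  hence "Cauchy (\<lambda>n. Rep_endo (X n))"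
    by (simp add: Cauchy_def dist_norm dist_endo_def norm_endo.rep_eq minus_endo.rep_eq)
  then obtain L where L: "(\<lambda>n. Rep_endo (X n)) \<longlonglongrightarrow> L"
    using Cauchy_convergent_iff convergent_def by blast
  have "X \<longlonglongrightarrow> Abs_endo L"
    using L unfolding LIMSEQ_iff
    by (simp add: norm_endo.rep_eq minus_endo.rep_eq Abs_endo_inverse)
  thus "convergent X" by (auto simp: convergent_def)
qed

lemma cscale: "r *\<^sub>R (z::complex) = of_real r * z"
  by (simp add: scaleR_conv_of_real)

definition app :: "'n::finite endo \<Rightarrow> complex^'n \<Rightarrow> complex^'n" where
  "app A x = blinfun_apply (Rep_endo A) x"

lemma app_mult[simp]: "app (A * B) x = app A (app B x)"
  by (simp add: app_def times_endo.rep_eq)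
lemma app_one[simp]: "app 1 x = x"
  by (simp add: app_def one_endo.rep_eq)
lemma app_add[simp]: "app (A + B) x = app A x + app B x"
  by (simp add: app_def plus_endo.rep_eq blinfun.add_left)
lemma app_diff[simp]: "app (A - B) x = app A x - app B x"
  by (simp add: app_def minus_endo.rep_eq blinfun.diff_left)
lemma app_uminus[simp]: "app (- A) x = - app A x"
  by (simp add: app_def uminus_endo.rep_eq blinfun.minus_left)
lemma app_scaleR[simp]: "app (r *\<^sub>R A) x = r *\<^sub>R app A x"
  by (simp add: app_def scaleR_endo.rep_eq blinfun.scaleR_left)
lemma app_zero[simp]: "app 0 x = 0"
  by (simp add: app_def zero_endo.rep_eq)
lemma app_add_right[simp]: "app A (x + y) = app A x + app A y"
  by (simp add: app_def blinfun.add_right)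
lemma app_diff_right[simp]: "app A (x - y) = app A x - app A y"
  by (simp add: app_def blinfun.diff_right)
lemma app_scaleR_right[simp]: "app A (r *\<^sub>R x) = r *\<^sub>R app A x"
  by (simp add: app_def blinfun.scaleR_right)
lemma app_minus_right[simp]: "app A (- x) = - app A x"
  by (simp add: app_def blinfun.minus_right)
lemma app_zero_right[simp]: "app A 0 = 0"
  by (simp add: app_def)

lemma norm_app: "norm (app A x) \<le> norm A * norm x"
  by (simp add: app_def norm_endo.rep_eq norm_blinfun)

lemma norm_endo_bound: "0 \<le> b \<Longrightarrow> (\<And>x. norm (app A x) \<le> b * norm x) \<Longrightarrow> norm A \<le> b"
  by (simp add: app_def norm_endo.rep_eq norm_blinfun_bound)

lemma endo_eqI: "(\<And>x. app A x = app B x) \<Longrightarrow> A = B"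
  by (metis Rep_endo_inject app_def blinfun_eqI)

lemma bounded_linear_app_left: "bounded_linear (\<lambda>A. app A x)"
proof -
  have "bounded_linear (\<lambda>A. blinfun_apply A x)" by simp
  moreover have "bounded_linear (Rep_endo :: 'n::finite endo \<Rightarrow> _)"
    by (rule bounded_linear_intro[where K=1])
      (simp_all add: plus_endo.rep_eq scaleR_endo.rep_eq norm_endo.rep_eq)
  ultimately show ?thesis unfolding app_def
    using bounded_linear_compose by blast
qed

lemma app_has_vector_derivative:
  "(F has_vector_derivative F') (at t within S) \<Longrightarrow>
   ((\<lambda>t. app (F t) x) has_vector_derivative app F' x) (at t within S)"
  by (rule bounded_linear.has_vector_derivative[OF bounded_linear_app_left])

lemma linear_mv: "linear (\<lambda>x. (M::complex^'n^'m) *v x)"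
  apply (rule linearI)
   apply (simp add: matrix_vector_right_distrib)
  apply (simp add: vec_eq_iff matrix_vector_mult_def cscale sum_distrib_left algebra_simps)
  done

lemma bounded_linear_mv: "bounded_linear (\<lambda>x. (M::complex^'n::finite^'m::finite) *v x)"
  using linear_mv linear_conv_bounded_linear by blast

definition em :: "complex^'n::finite^'n \<Rightarrow> 'n endo" where
  "em M = Abs_endo (Blinfun (\<lambda>x. M *v x))"

lemma app_em[simp]: "app (em M) x = M *v x"
  by (simp add: app_def em_def Abs_endo_inverse bounded_linear_Blinfun_apply bounded_linear_mv)

lemma opn_em: "opn M = norm (em M)"
  by (simp add: opn_def em_def norm_endo.rep_eq Abs_endo_inverse norm_blinfun.rep_eq
      bounded_linear_Blinfun_apply bounded_linear_mv)

lemma em_mult: "em (A ** B) = em A * em B"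
  by (rule endo_eqI) (simp add: matrix_vector_mul_assoc)
lemma em_one: "em (mat 1) = 1"
  by (rule endo_eqI) simp
lemma em_add: "em (A + B) = em A + em B"
  by (rule endo_eqI) (simp add: matrix_vector_mult_add_rdistrib)
lemma em_diff: "em (A - B) = em A - em B"
  by (rule endo_eqI) (simp add: matrix_vector_mult_diff_rdistrib)
lemma em_scaleR: "em (r *\<^sub>R A) = r *\<^sub>R em A"
  by (rule endo_eqI) (simp add: vec_eq_iff matrix_vector_mult_def cscale sum_distrib_left algebra_simps)

lemma linear_em: "linear em"
  by (rule linearI) (simp_all add: em_add em_scaleR)

lemma bounded_linear_em: "bounded_linear (em :: complex^'n::finite^'n \<Rightarrow> 'n endo)"
  using linear_em linear_conv_bounded_linear by blast

lemma em_mpow: "em (mpow A k) = em A ^ k"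
  by (induction k) (simp_all add: em_one em_mult)

definition mat_of :: "'n::finite endo \<Rightarrow> complex^'n^'n" where
  "mat_of X = (\<chi> i j. (app X (axis j 1)) $ i)"

lemma mat_of_em: "mat_of (em M) = M"
  by (simp add: mat_of_def vec_eq_iff matrix_vector_mult_def axis_def if_distrib if_distribR cong: if_cong)

lemma norm_axis_c: "norm (axis j (1::complex)) = 1"
  by (simp add: norm_vec_def L2_set_def axis_def if_distrib if_distribR cong: if_cong)

lemma bounded_linear_mat_of: "bounded_linear (mat_of :: 'n::finite endo \<Rightarrow> _)"
proof (rule bounded_linear_intro[where K="real CARD('n) * real CARD('n)"])
  fix X Y :: "'n endo" and r :: real
  show "mat_of (X + Y) = mat_of X + mat_of Y" by (simp add: mat_of_def vec_eq_iff)
  show "mat_of (r *\<^sub>R X) = r *\<^sub>R mat_of X" by (simp add: mat_of_def vec_eq_iff)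
  have "norm (mat_of X) \<le> (\<Sum>i\<in>UNIV. norm (mat_of X $ i))"
    by (simp add: norm_vec_def L2_set_le_sum)
  also have "\<dots> \<le> (\<Sum>i\<in>(UNIV::'n set). \<Sum>j\<in>(UNIV::'n set). norm X)"
  proof (rule sum_mono)
    fix i
    have "norm (mat_of X $ i) \<le> (\<Sum>j\<in>UNIV. norm (mat_of X $ i $ j))"
      by (simp add: norm_vec_def L2_set_le_sum)
    also have "\<dots> \<le> (\<Sum>j\<in>(UNIV::'n set). norm X)"
    proof (rule sum_mono)
      fix j
      have "norm (mat_of X $ i $ j) \<le> norm (app X (axis j 1))"
        using Finite_Cartesian_Product.norm_nth_le[of "app X (axis j 1)" i] by (simp add: mat_of_def)
      also have "\<dots> \<le> norm X * norm (axis j (1::complex))" by (rule norm_app)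
      finally show "norm (mat_of X $ i $ j) \<le> norm X" by (simp add: norm_axis_c)
    qed
    finally show "norm (mat_of X $ i) \<le> (\<Sum>j\<in>(UNIV::'n set). norm X)" .
  qed
  also have "\<dots> = norm X * (real CARD('n) * real CARD('n))" by simp
  finally show "norm (mat_of X) \<le> norm X * (real CARD('n) * real CARD('n))" .
qed

lemma em_mexp: "em (mexp A) = exp (em A)"
proof -
  let ?t = "\<lambda>k. (1 / fact k) *\<^sub>R mpow A k"
  have t: "?t k = mat_of ((em A)^k /\<^sub>R fact k)" for k
    by (metis em_mpow em_scaleR mat_of_em divide_inverse_commute inverse_eq_divide mult_1)
  have s: "summable (\<lambda>k. (em A)^k /\<^sub>R fact k)"
    using summable_exp_generic[of "em A"] by (simp add: divide_inverse_commute)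
  have sm: "summable ?t" unfolding t
    by (rule bounded_linear.summable[OF bounded_linear_mat_of s])
  have "em (mexp A) = (\<Sum>k. em (?t k))"
    unfolding mexp_def by (rule bounded_linear.suminf[OF bounded_linear_em sm])
  also have "\<dots> = (\<Sum>k. (em A)^k /\<^sub>R fact k)"
    by (simp add: em_scaleR em_mpow divide_inverse_commute)
  also have "\<dots> = exp (em A)" by (simp add: exp_def)
  finally show ?thesis .
qed

definition skew :: "'n::finite endo \<Rightarrow> bool" where
  "skew K \<longleftrightarrow> (\<forall>x. inner x (app K x) = 0)"
definition isom :: "'n::finite endo \<Rightarrow> bool" where
  "isom V \<longleftrightarrow> (\<forall>x. norm (app V x) = norm x)"

lemma skew_scaleR: "skew K \<Longrightarrow> skew (r *\<^sub>R K)"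
  by (simp add: skew_def)
lemma skew_add: "skew K \<Longrightarrow> skew L \<Longrightarrow> skew (K + L)"
  by (simp add: skew_def inner_add_right)
lemma skew_uminus: "skew K \<Longrightarrow> skew (- K)"
  by (simp add: skew_def)
lemma isom_one: "isom 1" by (simp add: isom_def)
lemma isom_mult: "isom A \<Longrightarrow> isom B \<Longrightarrow> isom (A * B)" by (simp add: isom_def)
lemma isom_norm_le: "isom V \<Longrightarrow> norm V \<le> 1"
  by (rule norm_endo_bound) (simp_all add: isom_def)

lemma BND:
  fixes f :: "real \<Rightarrow> 'a::real_normed_vector"
  assumes ab: "a \<le> b"
    and df: "\<And>t. t \<in> {a..b} \<Longrightarrow> (f has_vector_derivative f' t) (at t within {a..b})"
    and dg: "\<And>t. t \<in> {a..b} \<Longrightarrow> (g has_real_derivative g' t) (at t within {a..b})"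
    and bd: "\<And>t. t \<in> {a..b} \<Longrightarrow> norm (f' t) \<le> g' t"
  shows "norm (f b - f a) \<le> g b - g a"
proof (cases "a = b")
  case True thus ?thesis by simp
next
  case False
  hence ab': "a < b" using ab by simp
  have dg': "(g has_vector_derivative g' t) (at t within {a..b})" if "t \<in> {a..b}" for t
    using dg[OF that] by (simp add: has_real_derivative_iff_has_vector_derivative)
  show ?thesis
  proof (rule differentiable_bound_general[OF ab'])
    show "continuous_on {a..b} f" using df by (rule continuous_on_vector_derivative)
    show "continuous_on {a..b} g" using dg' by (rule continuous_on_vector_derivative)
    fix x assume x: "a < x" "x < b"
    hence xi: "x \<in> {a..b}" by simp
    show "(f has_vector_derivative f' x) (at x)" using df[OF xi] at_within_Icc_at[OF x] by simp
    show "(g has_vector_derivative g' x) (at x)" using dg'[OF xi] at_within_Icc_at[OF x] by simp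
    show "norm (f' x) \<le> g' x" using bd[OF xi] .
  qed
qed

lemma norm2_deriv:
  assumes "(y has_vector_derivative y') (at t within S)"
  shows "((\<lambda>t. (norm (y t))\<^sup>2) has_real_derivative (2 * inner (y t) y')) (at t within S)"
proof -
  have "((\<lambda>t. inner (y t) (y t)) has_derivative
          (\<lambda>h. inner (y t) (h *\<^sub>R y') + inner (h *\<^sub>R y') (y t))) (at t within S)"
    using assms unfolding has_vector_derivative_def by (intro has_derivative_inner)
  moreover have "(\<lambda>h. inner (y t) (h *\<^sub>R y') + inner (h *\<^sub>R y') (y t)) = (*) (2 * inner (y t) y')"
    by (auto simp: fun_eq_iff inner_commute algebra_simps)
  ultimately show ?thesis
    unfolding has_field_derivative_def power2_norm_eq_inner by simp
qed

lemma exp_chain: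
  fixes K :: "'a::{real_normed_algebra_1,banach}"
  assumes "(a has_real_derivative a') (at t within S)"
  shows "((\<lambda>t. exp (a t *\<^sub>R K)) has_vector_derivative (a' *\<^sub>R (K * exp (a t *\<^sub>R K)))) (at t within S)"
proof -
  have a: "(a has_vector_derivative a') (at t within S)"
    using assms by (simp add: has_real_derivative_iff_has_vector_derivative)
  have e: "((\<lambda>s. exp (s *\<^sub>R K)) has_vector_derivative K * exp (a t *\<^sub>R K)) (at (a t) within a ` S)"
    by (rule has_vector_derivative_at_within[OF exp_scaleR_has_vector_derivative_left])
  from vector_diff_chain_within[OF a e] show ?thesis by (simp add: o_def)
qed

lemma exp_inv1: "exp (r *\<^sub>R K) * exp ((- r) *\<^sub>R K) = 1"
  using exp_minus_inverse[of "r *\<^sub>R K"] by simp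
lemma exp_inv2: "exp ((- r) *\<^sub>R K) * exp (r *\<^sub>R K) = 1"
  using exp_minus_inverse[of "(-r) *\<^sub>R K"] by simp
lemma exp_comm: "K * exp (r *\<^sub>R K) = exp (r *\<^sub>R K) * K"
  by (simp add: exp_times_scaleR_commute)

lemma exp_isom:
  assumes K: "skew K"
  shows "isom (exp (s *\<^sub>R K))"
  unfolding isom_def
proof
  fix x
  define y where "y = (\<lambda>t. app (exp (t *\<^sub>R K)) x)"
  have dy: "(y has_vector_derivative app K (y t)) (at t within S)" for t S
  proof -
    have "((\<lambda>t. exp (t *\<^sub>R K)) has_vector_derivative (1 *\<^sub>R (K * exp (t *\<^sub>R K)))) (at t within S)"
      by (rule exp_chain) (rule DERIV_ident)
    from app_has_vector_derivative[OF this, of x] show ?thesis unfolding y_def by simp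
  qed
  have "\<forall>a b. a \<le> b \<longrightarrow> norm ((norm (y b))\<^sup>2 - (norm (y a))\<^sup>2) \<le> 0 - 0"
  proof (intro allI impI)
    fix a b :: real assume "a \<le> b"
    thus "norm ((norm (y b))\<^sup>2 - (norm (y a))\<^sup>2) \<le> 0 - 0"
      apply (rule BND[where f'="\<lambda>t. 2 * inner (y t) (app K (y t))" and g'="\<lambda>t. 0"])
        apply (rule norm2_deriv[OF dy, unfolded has_real_derivative_iff_has_vector_derivative])
       apply (rule DERIV_const)
      using K by (simp add: skew_def)
  qed
  hence *: "\<And>a b. a \<le> b \<Longrightarrow> (norm (y b))\<^sup>2 = (norm (y a))\<^sup>2" by simp
  have "(norm (y s))\<^sup>2 = (norm (y 0))\<^sup>2"
  proof (cases "0 \<le> s")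
    case True thus ?thesis using *[OF True] by simp
  next
    case False hence s0: "s \<le> 0" by simp
    show ?thesis using *[OF s0] by simp
  qed
  thus "norm (app (exp (s *\<^sub>R K)) x) = norm x"
    by (simp add: y_def)
qed

lemma exp_norm_le: "skew K \<Longrightarrow> norm (exp (s *\<^sub>R K)) \<le> 1"
  by (rule isom_norm_le[OF exp_isom])


lemma exp_deriv_lin:
  "((\<lambda>\<sigma>. exp ((c * \<sigma>) *\<^sub>R K)) has_vector_derivative (c *\<^sub>R (K * exp ((c * \<sigma>) *\<^sub>R K)))) (at \<sigma> within S)"
  by (rule exp_chain) (auto intro!: derivative_eq_intros)

lemma AD_deriv:
  "((\<lambda>\<sigma>. exp (\<sigma> *\<^sub>R K) * Y * exp ((-\<sigma>) *\<^sub>R K)) has_vector_derivative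
     exp (\<sigma> *\<^sub>R K) * (K*Y - Y*K) * exp ((-\<sigma>) *\<^sub>R K)) (at \<sigma> within S)"
proof -
  have d1: "((\<lambda>\<sigma>. exp (\<sigma> *\<^sub>R K)) has_vector_derivative (1 *\<^sub>R (K * exp (\<sigma> *\<^sub>R K)))) (at \<sigma> within S)"
    using exp_deriv_lin[of 1 K \<sigma> S] by simp
  have d2: "((\<lambda>\<sigma>. exp ((-\<sigma>) *\<^sub>R K)) has_vector_derivative ((-1) *\<^sub>R (K * exp ((-\<sigma>) *\<^sub>R K)))) (at \<sigma> within S)"
    using exp_deriv_lin[of "-1" K \<sigma> S] by simp
  have "((\<lambda>\<sigma>. exp (\<sigma> *\<^sub>R K) * Y * exp ((-\<sigma>) *\<^sub>R K)) has_vector_derivative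
     (exp (\<sigma> *\<^sub>R K) * Y * ((-1) *\<^sub>R (K * exp ((-\<sigma>) *\<^sub>R K))) + (1 *\<^sub>R (K * exp (\<sigma> *\<^sub>R K))) * Y * exp ((-\<sigma>) *\<^sub>R K))) (at \<sigma> within S)"
    by (intro has_vector_derivative_mult d2 has_vector_derivative_mult_left d1)
  moreover have "exp (\<sigma> *\<^sub>R K) * Y * ((-1) *\<^sub>R (K * exp ((-\<sigma>) *\<^sub>R K))) + (1 *\<^sub>R (K * exp (\<sigma> *\<^sub>R K))) * Y * exp ((-\<sigma>) *\<^sub>R K)
     = exp (\<sigma> *\<^sub>R K) * (K*Y - Y*K) * exp ((-\<sigma>) *\<^sub>R K)"
    by (simp add: exp_comm algebra_simps)
  ultimately show ?thesis by simp
qed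

lemma norm_conj_le:
  assumes "skew K"
  shows "norm (exp (a *\<^sub>R K) * C * exp (b *\<^sub>R K)) \<le> norm C"
proof -
  have e1: "norm (exp (a *\<^sub>R K)) \<le> 1" and e2: "norm (exp (b *\<^sub>R K)) \<le> 1"
    using exp_norm_le[OF assms] by auto
  have "norm (exp (a *\<^sub>R K) * C * exp (b *\<^sub>R K)) \<le> norm (exp (a *\<^sub>R K) * C) * norm (exp (b *\<^sub>R K))"
    by (rule norm_mult_ineq)
  also have "\<dots> \<le> norm (exp (a *\<^sub>R K) * C) * 1"
    by (rule mult_left_mono[OF e2 norm_ge_zero])
  also have "\<dots> \<le> norm (exp (a *\<^sub>R K)) * norm C"
    using norm_mult_ineq by simp
  also have "\<dots> \<le> 1 * norm C"
    by (rule mult_right_mono[OF e1 norm_ge_zero])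
  finally show ?thesis by simp
qed

lemma AD1_pos:
  assumes K: "skew K" and s: "0 \<le> s"
  shows "norm (exp (s *\<^sub>R K) * Y * exp ((-s) *\<^sub>R K) - Y) \<le> s * norm (K*Y - Y*K)"
proof -
  have "norm (exp (s *\<^sub>R K) * Y * exp ((-s) *\<^sub>R K) - exp (0 *\<^sub>R K) * Y * exp ((-0) *\<^sub>R K))
        \<le> s * norm (K*Y - Y*K) - 0 * norm (K*Y - Y*K)"
    apply (rule BND[OF s, where f="\<lambda>\<sigma>. exp (\<sigma> *\<^sub>R K) * Y * exp ((-\<sigma>) *\<^sub>R K)"
          and f'="\<lambda>\<sigma>. exp (\<sigma> *\<^sub>R K) * (K*Y - Y*K) * exp ((-\<sigma>) *\<^sub>R K)"
          and g="\<lambda>\<sigma>. \<sigma> * norm (K*Y - Y*K)" and g'="\<lambda>\<sigma>. norm (K*Y - Y*K)"])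
      apply (rule AD_deriv)
     apply (auto intro!: derivative_eq_intros)[1]
    by (rule norm_conj_le[OF K])
  thus ?thesis by simp
qed

lemma AD1:
  assumes K: "skew K"
  shows "norm (exp (s *\<^sub>R K) * Y * exp ((-s) *\<^sub>R K) - Y) \<le> \<bar>s\<bar> * norm (K*Y - Y*K)"
proof (cases "0 \<le> s")
  case True thus ?thesis using AD1_pos[OF K True] by simp
next
  case False
  hence s0: "0 \<le> -s" by simp
  have e1: "(-s) *\<^sub>R (-K) = s *\<^sub>R K" by simp
  have e2: "(-(-s)) *\<^sub>R (-K) = (-s) *\<^sub>R K" by simp
  have c: "(-K)*Y - Y*(-K) = -(K*Y - Y*K)" by simp
  have "norm (exp ((-s) *\<^sub>R (-K)) * Y * exp ((-(-s)) *\<^sub>R (-K)) - Y) \<le> (-s) * norm ((-K)*Y - Y*(-K))"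
    by (rule AD1_pos[OF skew_uminus[OF K] s0])
  hence "norm (exp (s *\<^sub>R K) * Y * exp ((-s) *\<^sub>R K) - Y) \<le> (-s) * norm (K*Y - Y*K)"
    unfolding e1 e2 c norm_minus_cancel .
  thus ?thesis using False by simp
qed

lemma scl_deriv: "((\<lambda>\<sigma>. \<sigma> *\<^sub>R C) has_vector_derivative C) (at x within S)"
proof -
  have "((\<lambda>\<sigma>. \<sigma> *\<^sub>R C) has_vector_derivative (x *\<^sub>R 0 + 1 *\<^sub>R C)) (at x within S)"
    by (intro has_vector_derivative_scaleR DERIV_ident has_vector_derivative_const)
  thus ?thesis by simp
qed

lemma AD2_pos:
  assumes K: "skew K" and s: "0 \<le> s"
  shows "norm (exp (s *\<^sub>R K) * Y * exp ((-s) *\<^sub>R K) - Y - s *\<^sub>R (K*Y - Y*K))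
         \<le> s\<^sup>2 / 2 * norm (K*(K*Y - Y*K) - (K*Y - Y*K)*K)"
proof -
  define C where "C = K*Y - Y*K"
  define f where "f = (\<lambda>\<sigma>. exp (\<sigma> *\<^sub>R K) * Y * exp ((-\<sigma>) *\<^sub>R K) - Y - \<sigma> *\<^sub>R C)"
  define g where "g = (\<lambda>\<sigma>::real. \<sigma>\<^sup>2 / 2 * norm (K*C - C*K))"
  have df: "(f has_vector_derivative (exp (t *\<^sub>R K) * C * exp ((-t) *\<^sub>R K) - 0 - C)) (at t within {0..s})" for t
    unfolding f_def C_def
    by (rule has_vector_derivative_diff[OF has_vector_derivative_diff[OF AD_deriv has_vector_derivative_const] scl_deriv])
  have dg: "(g has_real_derivative (t * norm (K*C - C*K))) (at t within {0..s})" for t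
    unfolding g_def by (auto intro!: derivative_eq_intros)
  have bd: "norm (exp (t *\<^sub>R K) * C * exp ((-t) *\<^sub>R K) - 0 - C) \<le> t * norm (K*C - C*K)" if "t \<in> {0..s}" for t
    using AD1_pos[OF K, of t C] that by simp
  have "norm (f s - f 0) \<le> g s - g 0"
    by (rule BND[OF s df dg bd])
  thus ?thesis by (simp add: f_def g_def C_def)
qed

lemma AD2:
  assumes K: "skew K"
  shows "norm (exp (s *\<^sub>R K) * Y * exp ((-s) *\<^sub>R K) - Y - s *\<^sub>R (K*Y - Y*K))
         \<le> s\<^sup>2 / 2 * norm (K*(K*Y - Y*K) - (K*Y - Y*K)*K)"
proof (cases "0 \<le> s")
  case True thus ?thesis using AD2_pos[OF K True] by simp
next
  case False
  hence s0: "0 \<le> -s" by simp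
  have e1: "(-s) *\<^sub>R (-K) = s *\<^sub>R K" by simp
  have e2: "(-(-s)) *\<^sub>R (-K) = (-s) *\<^sub>R K" by simp
  have c: "(-s) *\<^sub>R ((-K)*Y - Y*(-K)) = s *\<^sub>R (K*Y - Y*K)" by (simp add: algebra_simps)
  have c2: "(-K)*((-K)*Y - Y*(-K)) - ((-K)*Y - Y*(-K))*(-K) = K*(K*Y - Y*K) - (K*Y - Y*K)*K"
    by (simp add: algebra_simps)
  have c3: "(-s)\<^sup>2 = s\<^sup>2" by simp
  have "norm (exp ((-s) *\<^sub>R (-K)) * Y * exp ((-(-s)) *\<^sub>R (-K)) - Y - (-s) *\<^sub>R ((-K)*Y - Y*(-K)))
        \<le> (-s)\<^sup>2 / 2 * norm ((-K)*((-K)*Y - Y*(-K)) - ((-K)*Y - Y*(-K))*(-K))"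
    by (rule AD2_pos[OF skew_uminus[OF K] s0])
  thus ?thesis unfolding e1 e2 c c2 c3 .
qed

lemma sqrt_eps_le:
  fixes a b :: real
  assumes "\<And>e. e > 0 \<Longrightarrow> a \<le> b + sqrt e"
  shows "a \<le> b"
proof (rule ccontr)
  assume "\<not> a \<le> b"
  hence d: "a - b > 0" by simp
  have "a \<le> b + sqrt (((a - b)/2)\<^sup>2)" using assms[of "((a-b)/2)\<^sup>2"] d by simp
  also have "sqrt (((a - b)/2)\<^sup>2) = (a - b)/2" using d by simp
  finally show False using d by (simp add: field_simps)
qed

lemma step_bound:
  fixes Ue V :: "real \<Rightarrow> 'n::finite endo"
  assumes t01: "t0 \<le> t1"
    and dU: "\<And>t. t \<in> {t0..t1} \<Longrightarrow> (Ue has_vector_derivative G t * Ue t) (at t within {t0..t1})"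
    and dV: "\<And>t. t \<in> {t0..t1} \<Longrightarrow> (V has_vector_derivative V' t) (at t within {t0..t1})"
    and sk: "\<And>t. t \<in> {t0..t1} \<Longrightarrow> skew (G t)"
    and R: "\<And>t y. t \<in> {t0..t1} \<Longrightarrow> norm (app (V' t - G t * V t) y) \<le> p t * norm y"
    and dP: "\<And>t. t \<in> {t0..t1} \<Longrightarrow> (P has_real_derivative p t) (at t within {t0..t1})"
    and V0: "V t0 = 1" and W: "isom W"
  shows "norm (app (V t1 * W - Ue t1) x) \<le> norm (app (W - Ue t0) x) + (P t1 - P t0) * norm x"
proof -
  define e where "e = (\<lambda>t. app (V t * W - Ue t) x)"
  define r where "r = (\<lambda>t. app (V' t - G t * V t) (app W x))"
  have de: "(e has_vector_derivative (app (G t) (e t) + r t)) (at t within {t0..t1})"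
    if t: "t \<in> {t0..t1}" for t
  proof -
    have "((\<lambda>t. V t * W - Ue t) has_vector_derivative (V' t * W - G t * Ue t)) (at t within {t0..t1})"
      by (rule has_vector_derivative_diff[OF has_vector_derivative_mult_left[OF dV[OF t]] dU[OF t]])
    from app_has_vector_derivative[OF this, of x]
    have "(e has_vector_derivative app (V' t * W - G t * Ue t) x) (at t within {t0..t1})"
      unfolding e_def .
    moreover have "app (V' t * W - G t * Ue t) x = app (G t) (e t) + r t"
      by (simp add: e_def r_def algebra_simps)
    ultimately show ?thesis by simp
  qed
  have rb: "norm (r t) \<le> p t * norm x" if t: "t \<in> {t0..t1}" for t
    using R[OF t, of "app W x"] W by (simp add: r_def isom_def)
  have key: "norm (e t1) \<le> norm (e t0) + (P t1 - P t0) * norm x + sqrt \<epsilon>" if eps: "\<epsilon> > 0" for \<epsilon>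
  proof -
    define u where "u = (\<lambda>t. (norm (e t))\<^sup>2 + \<epsilon>)"
    have upos: "u t > 0" for t using eps by (simp add: u_def add_nonneg_pos)
    have du: "(u has_real_derivative (2 * inner (e t) (r t))) (at t within {t0..t1})"
      if t: "t \<in> {t0..t1}" for t
    proof -
      have "(u has_real_derivative (2 * inner (e t) (app (G t) (e t) + r t) + 0)) (at t within {t0..t1})"
        unfolding u_def by (intro DERIV_add norm2_deriv de t DERIV_const)
      moreover have "inner (e t) (app (G t) (e t)) = 0" using sk[OF t] by (simp add: skew_def)
      ultimately show ?thesis by (simp add: inner_add_right)
    qed
    have dsq: "((\<lambda>t. sqrt (u t)) has_real_derivative (inverse (sqrt (u t)) / 2 * (2 * inner (e t) (r t)))) (at t within {t0..t1})"
      if t: "t \<in> {t0..t1}" for t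
      by (rule DERIV_chain2[OF DERIV_real_sqrt[OF upos] du[OF t]])
    have bd: "norm (inverse (sqrt (u t)) / 2 * (2 * inner (e t) (r t))) \<le> p t * norm x"
      if t: "t \<in> {t0..t1}" for t
    proof -
      have "norm (inverse (sqrt (u t)) / 2 * (2 * inner (e t) (r t))) = \<bar>inner (e t) (r t)\<bar> / sqrt (u t)"
        using upos[of t] by (simp add: abs_mult field_simps)
      also have "\<dots> \<le> norm (e t) * norm (r t) / sqrt (u t)"
        using upos[of t] by (intro divide_right_mono Cauchy_Schwarz_ineq2) simp
      also have "\<dots> \<le> sqrt (u t) * norm (r t) / sqrt (u t)"
      proof -
        have "norm (e t) \<le> sqrt (u t)"
          unfolding u_def using eps by (intro real_le_rsqrt) simp
        thus ?thesis using upos[of t] by (intro divide_right_mono mult_right_mono) simp_all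
      qed
      also have "\<dots> = norm (r t)" using upos[of t] by simp
      also have "\<dots> \<le> p t * norm x" by (rule rb[OF t])
      finally show ?thesis .
    qed
    have dP': "((\<lambda>t. P t * norm x) has_real_derivative (p t * norm x)) (at t within {t0..t1})"
      if t: "t \<in> {t0..t1}" for t
      using DERIV_cmult_right[OF dP[OF t], of "norm x"] .
    have "norm (sqrt (u t1) - sqrt (u t0)) \<le> P t1 * norm x - P t0 * norm x"
      apply (rule BND[OF t01, where f'="\<lambda>t. inverse (sqrt (u t)) / 2 * (2 * inner (e t) (r t))"])
        apply (rule dsq[unfolded has_real_derivative_iff_has_vector_derivative], assumption)
       apply (rule dP', assumption)
      by (rule bd)
    hence "sqrt (u t1) \<le> sqrt (u t0) + (P t1 - P t0) * norm x" by (simp add: algebra_simps)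
    moreover have "norm (e t1) \<le> sqrt (u t1)"
      unfolding u_def using eps by (intro real_le_rsqrt) simp
    moreover have "sqrt (u t0) \<le> norm (e t0) + sqrt \<epsilon>"
      unfolding u_def using sqrt_add_le_add_sqrt[of "(norm (e t0))\<^sup>2" \<epsilon>] eps by simp
    ultimately show ?thesis by simp
  qed
  have "norm (e t1) \<le> norm (e t0) + (P t1 - P t0) * norm x"
    by (rule sqrt_eps_le) (use key in auto)
  thus ?thesis by (simp add: e_def V0)
qed

fun sp :: "(real \<Rightarrow> 'n::finite endo) \<Rightarrow> real \<Rightarrow> nat \<Rightarrow> 'n endo" where
  "sp S h 0 = 1"
| "sp S h (Suc k) = S (real k * h) * sp S h k"

lemma em_stepprod: "em (stepprod S h k) = sp (\<lambda>t. em (S t)) h k"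
  by (induction k) (simp_all add: em_one em_mult)

lemma assemble:
  fixes Ue S :: "real \<Rightarrow> 'n::finite endo"
  assumes h: "0 \<le> h" and dl: "0 \<le> \<delta>"
    and dU: "\<And>t. t \<in> {0..real L * h} \<Longrightarrow> (Ue has_vector_derivative G t * Ue t) (at t within {0..real L * h})"
    and sk: "\<And>t. t \<in> {0..real L * h} \<Longrightarrow> skew (G t)"
    and U0: "Ue 0 = 1"
    and steps: "\<And>k. k < L \<Longrightarrow> \<exists>V V' p P.
        (\<forall>t\<in>{real k * h..real k * h + h}.
            (V has_vector_derivative V' t) (at t within {real k * h..real k * h + h})
          \<and> (\<forall>y. norm (app (V' t - G t * V t) y) \<le> p t * norm y)
          \<and> (P has_real_derivative p t) (at t within {real k * h..real k * h + h}))
        \<and> V (real k * h) = 1 \<and> V (real k * h + h) = S (real k * h)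
        \<and> P (real k * h + h) - P (real k * h) \<le> \<delta>"
    and isS: "\<And>k. k < L \<Longrightarrow> isom (S (real k * h))"
  shows "norm (sp S h L - Ue (real L * h)) \<le> real L * \<delta>"
proof -
  have main: "k \<le> L \<Longrightarrow> isom (sp S h k) \<and> (\<forall>x. norm (app (sp S h k - Ue (real k * h)) x) \<le> real k * \<delta> * norm x)" for k
  proof (induction k)
    case 0 thus ?case by (simp add: U0 isom_one)
  next
    case (Suc k)
    hence kL: "k < L" and IH: "isom (sp S h k)" "\<And>x. norm (app (sp S h k - Ue (real k * h)) x) \<le> real k * \<delta> * norm x"
      by auto
    obtain V V' p P where
      VV: "\<And>t. t\<in>{real k * h..real k * h + h} \<Longrightarrow> (V has_vector_derivative V' t) (at t within {real k * h..real k * h + h})"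
      and R: "\<And>t y. t\<in>{real k * h..real k * h + h} \<Longrightarrow> norm (app (V' t - G t * V t) y) \<le> p t * norm y"
      and dP: "\<And>t. t\<in>{real k * h..real k * h + h} \<Longrightarrow> (P has_real_derivative p t) (at t within {real k * h..real k * h + h})"
      and V0: "V (real k * h) = 1" and V1: "V (real k * h + h) = S (real k * h)"
      and Pd: "P (real k * h + h) - P (real k * h) \<le> \<delta>"
      using steps[OF kL] by blast
    have sub: "{real k * h..real k * h + h} \<subseteq> {0..real L * h}"
    proof -
      have "real k * h + h = real (Suc k) * h" by (simp add: algebra_simps)
      also have "\<dots> \<le> real L * h" using kL h by (intro mult_right_mono) auto
      finally show ?thesis using h by auto
    qed
    have isk: "isom (sp S h (Suc k))" using isS[OF kL] IH(1) by (simp add: isom_mult)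
    have "norm (app (sp S h (Suc k) - Ue (real (Suc k) * h)) x) \<le> real (Suc k) * \<delta> * norm x" for x
    proof -
      have eq: "real (Suc k) * h = real k * h + h" by (simp add: algebra_simps)
      have "norm (app (V (real k * h + h) * sp S h k - Ue (real k * h + h)) x)
            \<le> norm (app (sp S h k - Ue (real k * h)) x) + (P (real k * h + h) - P (real k * h)) * norm x"
        apply (rule step_bound[where G=G and V'=V' and p=p])
               apply (simp add: h)
              apply (rule has_vector_derivative_within_subset[OF dU sub]; use sub in blast)
             apply (rule VV; assumption)
            apply (rule sk; use sub in blast)
           apply (rule R; assumption)
          apply (rule dP; assumption)
         apply (rule V0)
        apply (rule IH(1))
        done
      also have "\<dots> \<le> real k * \<delta> * norm x + \<delta> * norm x"
        by (intro add_mono IH(2) mult_right_mono Pd) simp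
      finally show ?thesis unfolding eq V1 by (simp add: algebra_simps)
    qed
    thus ?case using isk by simp
  qed
  show ?thesis
    by (rule norm_endo_bound) (use main[of L] dl in auto)
qed


lemma cmat_add: "cmat c (A + B) = cmat c A + cmat c B"
  by (simp add: cmat_def vec_eq_iff distrib_left)
lemma cmat_diff: "cmat c (A - B) = cmat c A - cmat c B"
  by (simp add: cmat_def vec_eq_iff right_diff_distrib)
lemma cmat_scaleR: "cmat c (r *\<^sub>R A) = r *\<^sub>R cmat c A"
  by (simp add: cmat_def vec_eq_iff cscale)
lemma cmat_ofreal: "cmat (c * complex_of_real r) H = r *\<^sub>R cmat c H"
  by (simp add: cmat_def vec_eq_iff cscale)
lemma cmat_mult: "cmat a A ** cmat b B = cmat (a * b) (A ** B)"
  by (simp add: cmat_def vec_eq_iff matrix_matrix_mult_def sum_distrib_left algebra_simps)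

lemma em_cmat_comm:
  "em (cmat a A) * em (cmat b B) - em (cmat b B) * em (cmat a A) = em (cmat (a * b) (comm A B))"
  by (simp add: em_mult[symmetric] em_diff[symmetric] cmat_mult comm_def cmat_diff mult.commute)

lemma cmat_mv: "cmat c M *v x = (\<chi> i. c * (M *v x) $ i)"
  by (simp add: cmat_def vec_eq_iff matrix_vector_mult_def sum_distrib_left algebra_simps)
lemma app_em_cmat: "app (em (cmat c M)) x = (\<chi> i. c * (M *v x) $ i)"
  by (simp add: cmat_mv)

lemma norm_cmul_vec: "norm (\<chi> i. c * (v::complex^'n::finite) $ i) = cmod c * norm v"
proof -
  have "norm (\<chi> i. c * v $ i) = sqrt ((cmod c)\<^sup>2 * (\<Sum>i\<in>UNIV. (cmod (v $ i))\<^sup>2))"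
    by (simp add: norm_vec_def L2_set_def norm_mult power_mult_distrib sum_distrib_left)
  also have "\<dots> = cmod c * norm v"
    by (simp add: real_sqrt_mult norm_vec_def L2_set_def)
  finally show ?thesis .
qed

lemma norm_em_cmat: "norm (em (cmat c M)) \<le> cmod c * opn M"
proof (rule norm_endo_bound)
  show "0 \<le> cmod c * opn M" by (simp add: opn_em)
  fix x
  have "norm (app (em (cmat c M)) x) = cmod c * norm (app (em M) x)"
    by (simp add: cmat_mv norm_cmul_vec)
  also have "\<dots> \<le> cmod c * (opn M * norm x)"
    using norm_app[of "em M" x] by (intro mult_left_mono) (simp_all add: opn_em)
  finally show "norm (app (em (cmat c M)) x) \<le> cmod c * opn M * norm x" by (simp add: mult.assoc)
qed

lemma cinner: "inner (a::complex) b = Re (cnj a * b)"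
  by (simp add: inner_complex_def)

lemma skew_herm:
  fixes H :: "complex^'n::finite^'n"
  assumes H: "hermitian H"
  shows "skew (em (cmat (- \<i>) H))"
  unfolding skew_def
proof
  fix x :: "complex^'n"
  define q where "q = (\<Sum>i\<in>UNIV. cnj (x $ i) * (H *v x) $ i)"
  have hc: "cnj (H $ i $ j) = H $ j $ i" for i j
    using H[unfolded hermitian_def, rule_format, of j i] by (rule sym)
  have A: "inner x (app (em (cmat (- \<i>) H)) x) = (\<Sum>i\<in>UNIV. Re (cnj (x $ i) * (- \<i> * (H *v x) $ i)))"
    by (simp only: app_em cmat_mv inner_vec_def vec_lambda_beta cinner)
  have B: "(\<Sum>i\<in>UNIV. Re (cnj (x $ i) * (- \<i> * (H *v x) $ i))) = Re (- \<i> * q)"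
  proof -
    have "(\<Sum>i\<in>UNIV. Re (cnj (x $ i) * (- \<i> * (H *v x) $ i))) = Re (\<Sum>i\<in>UNIV. - \<i> * (cnj (x $ i) * (H *v x) $ i))"
      by (simp only: Re_sum mult.left_commute)
    also have "\<dots> = Re (- \<i> * q)" by (simp only: q_def sum_distrib_left)
    finally show ?thesis .
  qed
  have C: "q = (\<Sum>i\<in>UNIV. \<Sum>j\<in>UNIV. cnj (x $ i) * (H $ i $ j * x $ j))"
    by (simp only: q_def matrix_vector_mult_def vec_lambda_beta sum_distrib_left)
  have "cnj q = (\<Sum>i\<in>UNIV. \<Sum>j\<in>UNIV. x $ i * (cnj (H $ i $ j) * cnj (x $ j)))"
    by (simp only: C cnj_sum complex_cnj_mult complex_cnj_cnj)
  also have "\<dots> = (\<Sum>i\<in>UNIV. \<Sum>j\<in>UNIV. x $ i * (H $ j $ i * cnj (x $ j)))"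
    by (simp only: hc)
  also have "\<dots> = (\<Sum>j\<in>UNIV. \<Sum>i\<in>UNIV. x $ i * (H $ j $ i * cnj (x $ j)))"
    by (rule sum.swap)
  also have "\<dots> = q"
    unfolding C by (intro sum.cong refl) (simp add: algebra_simps)
  finally have "cnj q = q" .
  hence "Im q = 0" by (simp add: complex_eq_iff)
  moreover have "Re (- \<i> * q) = Im q" by simp
  ultimately show "inner x (app (em (cmat (- \<i>) H)) x) = 0" using A B by simp
qed

lemma exp_minus_inverse2: "exp (- x) * exp x = 1"
  using exp_minus_inverse[of "- x"] by simp
lemma exp_inv2': "exp ((- r) *\<^sub>R K) * (exp (r *\<^sub>R K) * X) = X"
  by (simp add: mult.assoc[symmetric] exp_minus_inverse2)
lemma exp_inv1': "exp (r *\<^sub>R K) * (exp ((- r) *\<^sub>R K) * X) = X"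
  by (simp add: mult.assoc[symmetric] exp_minus_inverse)

lemma resid1:
  assumes "D = X * V" "isom V" "norm X \<le> p"
  shows "norm (app D y) \<le> p * norm y"
proof -
  have "norm (app D y) = norm (app X (app V y))" using assms(1) by simp
  also have "\<dots> \<le> norm X * norm (app V y)" by (rule norm_app)
  also have "\<dots> = norm X * norm y" using assms(2) by (simp add: isom_def)
  also have "\<dots> \<le> p * norm y" by (intro mult_right_mono assms(3)) simp
  finally show ?thesis .
qed

lemma resid2:
  assumes "D = A * X * W" "isom A" "isom W" "norm X \<le> p"
  shows "norm (app D y) \<le> p * norm y"
proof -
  have "norm (app D y) = norm (app X (app W y))" using assms(1,2) by (simp add: isom_def)
  also have "\<dots> \<le> norm X * norm (app W y)" by (rule norm_app)
  also have "\<dots> = norm X * norm y" using assms(3) by (simp add: isom_def)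
  also have "\<dots> \<le> p * norm y" by (intro mult_right_mono assms(4)) simp
  finally show ?thesis .
qed

lemma lip:
  fixes f :: "real \<Rightarrow> real"
  assumes d: "\<And>t. t \<in> {0..T} \<Longrightarrow> (f has_real_derivative f' t) (at t within {0..T})"
    and b: "\<And>t. t \<in> {0..T} \<Longrightarrow> \<bar>f' t\<bar> \<le> D"
    and u: "u \<in> {0..T}" and v: "v \<in> {0..T}" and uv: "u \<le> v"
  shows "\<bar>f v - f u\<bar> \<le> D * (v - u)"
proof -
  have sub: "{u..v} \<subseteq> {0..T}" using u v by auto
  have "norm (f v - f u) \<le> D * v - D * u"
    apply (rule BND[OF uv, where f'=f' and g'="\<lambda>t. D"])
      apply (rule has_vector_derivative_within_subset[OF d[unfolded has_real_derivative_iff_has_vector_derivative] sub]; use sub in blast)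
     apply (auto intro!: derivative_eq_intros)[1]
    using b sub by auto
  thus ?thesis by (simp add: algebra_simps)
qed

lemma abs_le_supn:
  assumes "continuous_on {0..T} f" "t \<in> {0..T}"
  shows "\<bar>f t\<bar> \<le> supn T f"
proof -
  have "compact ((\<lambda>t. \<bar>f t\<bar>) ` {0..T})"
    by (intro compact_continuous_image continuous_intros assms(1)) simp
  hence "bdd_above ((\<lambda>t. \<bar>f t\<bar>) ` {0..T})" by (simp add: bounded_imp_bdd_above compact_imp_bounded)
  thus ?thesis unfolding supn_def using assms(2) by (rule cSUP_upper2) simp
qed

lemma supn_nonneg: "0 \<le> T \<Longrightarrow> continuous_on {0..T} f \<Longrightarrow> 0 \<le> supn T f"
  using abs_le_supn[of T f 0] by simp

lemma tri3: "norm (x + y + z) \<le> norm x + norm y + norm (z::'a::real_normed_vector)"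
  using norm_triangle_ineq[of "x+y" z] norm_triangle_ineq[of x y] by linarith

lemma s1_step:
  fixes K1 K2 :: "'n::finite endo" and f1 f1' f2 f2' :: "real \<Rightarrow> real"
  assumes sk1: "skew K1" and sk2: "skew K2"
    and t0: "0 \<le> t0" and h: "0 \<le> h" and th: "t0 + h \<le> T"
    and d1: "\<And>t. t \<in> {0..T} \<Longrightarrow> (f1 has_real_derivative f1' t) (at t within {0..T})"
    and d2: "\<And>t. t \<in> {0..T} \<Longrightarrow> (f2 has_real_derivative f2' t) (at t within {0..T})"
    and M1: "\<And>t. t \<in> {0..T} \<Longrightarrow> \<bar>f1 t\<bar> \<le> M1" and D1: "\<And>t. t \<in> {0..T} \<Longrightarrow> \<bar>f1' t\<bar> \<le> D1"
    and M2: "\<And>t. t \<in> {0..T} \<Longrightarrow> \<bar>f2 t\<bar> \<le> M2" and D2: "\<And>t. t \<in> {0..T} \<Longrightarrow> \<bar>f2' t\<bar> \<le> D2"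
    and n1: "norm K1 \<le> n1" and n2: "norm K2 \<le> n2" and c12: "norm (K2*K1 - K1*K2) \<le> c12"
  shows "\<exists>V V' p P.
        (\<forall>t\<in>{t0..t0 + h}.
            (V has_vector_derivative V' t) (at t within {t0..t0 + h})
          \<and> (\<forall>y. norm (app (V' t - (f1 t *\<^sub>R K1 + f2 t *\<^sub>R K2) * V t) y) \<le> p t * norm y)
          \<and> (P has_real_derivative p t) (at t within {t0..t0 + h}))
        \<and> V t0 = 1 \<and> V (t0 + h) = exp ((f2 (t0 + h) * h) *\<^sub>R K2) * exp ((f1 (t0 + h) * h) *\<^sub>R K1)
        \<and> P (t0 + h) - P t0 \<le> (D1 * n1 + D2 * n2 + M1 * M2 * c12) / 2 * h\<^sup>2"
proof -
  define a where "a = f1 (t0 + h)"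
  define b where "b = f2 (t0 + h)"
  define E1 where "E1 = (\<lambda>t. exp (((t - t0) * a) *\<^sub>R K1))"
  define E2 where "E2 = (\<lambda>t. exp (((t - t0) * b) *\<^sub>R K2))"
  define E2i where "E2i = (\<lambda>t. exp ((- ((t - t0) * b)) *\<^sub>R K2))"
  define V where "V = (\<lambda>t. E2 t * E1 t)"
  define V' where "V' = (\<lambda>t. E2 t * (a *\<^sub>R (K1 * E1 t)) + (b *\<^sub>R (K2 * E2 t)) * E1 t)"
  define C where "C = D1 * n1 + D2 * n2"
  define M where "M = M1 * M2 * c12"
  define p where "p = (\<lambda>t. C * (t0 + h - t) + M * (t - t0))"
  define P where "P = (\<lambda>t. - C * (t0 + h - t) * (t0 + h - t) / 2 + M * (t - t0) * (t - t0) / 2)"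
  have dV: "(V has_vector_derivative V' t) (at t within S)" for t S
  proof -
    have e1: "(E1 has_vector_derivative a *\<^sub>R (K1 * E1 t)) (at t within S)"
      unfolding E1_def by (rule exp_chain) (auto intro!: derivative_eq_intros)
    have e2: "(E2 has_vector_derivative b *\<^sub>R (K2 * E2 t)) (at t within S)"
      unfolding E2_def by (rule exp_chain) (auto intro!: derivative_eq_intros)
    show ?thesis unfolding V_def V'_def by (rule has_vector_derivative_mult[OF e2 e1])
  qed
  have isV: "isom (V t)" for t
    unfolding V_def E1_def E2_def by (intro isom_mult exp_isom sk1 sk2)
  have t_in: "t \<in> {0..T}" if "t \<in> {t0..t0+h}" for t using that t0 th by auto
  have R: "norm (app (V' t - (f1 t *\<^sub>R K1 + f2 t *\<^sub>R K2) * V t) y) \<le> p t * norm y"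
    if t: "t \<in> {t0..t0+h}" for t y
  proof (rule resid1)
    show "V' t - (f1 t *\<^sub>R K1 + f2 t *\<^sub>R K2) * V t
        = ((b - f2 t) *\<^sub>R K2 + (a - f1 t) *\<^sub>R K1 + a *\<^sub>R (E2 t * K1 * E2i t - K1)) * V t"
    proof -
      have inv: "E2i t * (E2 t * X) = X" for X unfolding E2_def E2i_def by (rule exp_inv2')
      show ?thesis unfolding V_def V'_def by (simp add: algebra_simps inv)
    qed
    show "isom (V t)" by (rule isV)
    have ab1: "\<bar>a - f1 t\<bar> \<le> D1 * (t0 + h - t)"
      unfolding a_def using lip[OF d1 D1, of t "t0+h"] t t_in[OF t] t0 th by (auto simp: abs_minus_commute)
    have ab2: "\<bar>b - f2 t\<bar> \<le> D2 * (t0 + h - t)"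
      unfolding b_def using lip[OF d2 D2, of t "t0+h"] t t_in[OF t] t0 th by (auto simp: abs_minus_commute)
    have am: "\<bar>a\<bar> \<le> M1" unfolding a_def using M1 t0 th h by auto
    have bm: "\<bar>b\<bar> \<le> M2" unfolding b_def using M2 t0 th h by auto
    have ad: "norm (E2 t * K1 * E2i t - K1) \<le> (t - t0) * M2 * c12"
    proof -
      have "norm (E2 t * K1 * E2i t - K1) \<le> \<bar>(t - t0) * b\<bar> * norm (K2*K1 - K1*K2)"
        unfolding E2_def E2i_def by (rule AD1[OF sk2])
      also have "\<dots> \<le> ((t - t0) * M2) * c12"
        using t bm c12 by (intro mult_mono) (auto simp: abs_mult intro!: mult_left_mono)
      finally show ?thesis by simp
    qed
    have "norm ((b - f2 t) *\<^sub>R K2 + (a - f1 t) *\<^sub>R K1 + a *\<^sub>R (E2 t * K1 * E2i t - K1))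
        \<le> \<bar>b - f2 t\<bar> * norm K2 + \<bar>a - f1 t\<bar> * norm K1 + \<bar>a\<bar> * norm (E2 t * K1 * E2i t - K1)"
      using tri3[of "(b - f2 t) *\<^sub>R K2" "(a - f1 t) *\<^sub>R K1" "a *\<^sub>R (E2 t * K1 * E2i t - K1)"] by simp
    also have "\<dots> \<le> (D2 * (t0 + h - t)) * n2 + (D1 * (t0 + h - t)) * n1 + M1 * ((t - t0) * M2 * c12)"
      using order_trans[OF abs_ge_zero ab1] order_trans[OF abs_ge_zero ab2] order_trans[OF abs_ge_zero am]
      by (intro add_mono mult_mono ab1 ab2 am ad n1 n2) auto
    also have "\<dots> = p t" by (simp add: p_def C_def M_def algebra_simps)
    finally show "norm ((b - f2 t) *\<^sub>R K2 + (a - f1 t) *\<^sub>R K1 + a *\<^sub>R (E2 t * K1 * E2i t - K1)) \<le> p t" .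
  qed
  have dP: "(P has_real_derivative p t) (at t within S)" for t S
    unfolding P_def p_def by (auto intro!: derivative_eq_intros simp: field_simps)
  have V0: "V t0 = 1" by (simp add: V_def E1_def E2_def)
  have V1: "V (t0 + h) = exp ((f2 (t0 + h) * h) *\<^sub>R K2) * exp ((f1 (t0 + h) * h) *\<^sub>R K1)"
    by (simp add: V_def E1_def E2_def a_def b_def mult.commute)
  have P1: "P (t0 + h) - P t0 = (D1 * n1 + D2 * n2 + M1 * M2 * c12) / 2 * h\<^sup>2"
    by (simp add: P_def C_def M_def power2_eq_square field_simps)
  show ?thesis
    by (rule exI[of _ V], rule exI[of _ V'], rule exI[of _ p], rule exI[of _ P])
       (use dV R dP V0 V1 P1 in auto)
qed

lemma prim_deriv:
  assumes c: "continuous_on {0..T} f" and t: "t \<in> {0..T}"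
  shows "((\<lambda>t. integral {0..t} f) has_real_derivative f t) (at t within {0..T})"
  using integral_has_vector_derivative[OF c t] by (simp add: has_real_derivative_iff_has_vector_derivative)

lemma prim_diff:
  fixes f :: "real \<Rightarrow> real"
  assumes c: "continuous_on {0..T} f" and ab: "0 \<le> a" "a \<le> b" "b \<le> T"
  shows "integral {a..b} f = integral {0..b} f - integral {0..a} f"
proof -
  have "f integrable_on {0..b}"
    by (rule integrable_continuous_interval[OF continuous_on_subset[OF c]]) (use ab in auto)
  from Henstock_Kurzweil_Integration.integral_combine[OF ab(1,2) this] show ?thesis by simp
qed

lemma g1_step:
  fixes K1 K2 :: "'n::finite endo" and f1 f2 :: "real \<Rightarrow> real"
  assumes sk1: "skew K1" and sk2: "skew K2"
    and t0: "0 \<le> t0" and h: "0 \<le> h" and th: "t0 + h \<le> T"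
    and c1: "continuous_on {0..T} f1" and c2: "continuous_on {0..T} f2"
    and M1: "\<And>t. t \<in> {0..T} \<Longrightarrow> \<bar>f1 t\<bar> \<le> M1"
    and M2: "\<And>t. t \<in> {0..T} \<Longrightarrow> \<bar>f2 t\<bar> \<le> M2"
    and c12: "norm (K2*K1 - K1*K2) \<le> c12"
  shows "\<exists>V V' p P.
        (\<forall>t\<in>{t0..t0 + h}.
            (V has_vector_derivative V' t) (at t within {t0..t0 + h})
          \<and> (\<forall>y. norm (app (V' t - (f1 t *\<^sub>R K1 + f2 t *\<^sub>R K2) * V t) y) \<le> p t * norm y)
          \<and> (P has_real_derivative p t) (at t within {t0..t0 + h}))
        \<and> V t0 = 1 \<and> V (t0 + h) = exp (integral {t0..t0 + h} f2 *\<^sub>R K2) * exp (integral {t0..t0 + h} f1 *\<^sub>R K1)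
        \<and> P (t0 + h) - P t0 \<le> M1 * M2 * c12 / 2 * h\<^sup>2"
proof -
  define F1 where "F1 = (\<lambda>t. integral {0..t} f1)"
  define F2 where "F2 = (\<lambda>t. integral {0..t} f2)"
  define A where "A = (\<lambda>t. F1 t - F1 t0)"
  define B where "B = (\<lambda>t. F2 t - F2 t0)"
  define E1 where "E1 = (\<lambda>t. exp (A t *\<^sub>R K1))"
  define E2 where "E2 = (\<lambda>t. exp (B t *\<^sub>R K2))"
  define E2i where "E2i = (\<lambda>t. exp ((- B t) *\<^sub>R K2))"
  define V where "V = (\<lambda>t. E2 t * E1 t)"
  define V' where "V' = (\<lambda>t. E2 t * (f1 t *\<^sub>R (K1 * E1 t)) + (f2 t *\<^sub>R (K2 * E2 t)) * E1 t)"
  define M where "M = M1 * M2 * c12"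
  define p where "p = (\<lambda>t. M * (t - t0))"
  define P where "P = (\<lambda>t. M * (t - t0) * (t - t0) / 2)"
  have sub: "{t0..t0+h} \<subseteq> {0..T}" using t0 th by auto
  have dF1: "(F1 has_real_derivative f1 t) (at t within {0..T})" if "t \<in> {0..T}" for t
    unfolding F1_def by (rule prim_deriv[OF c1 that])
  have dF2: "(F2 has_real_derivative f2 t) (at t within {0..T})" if "t \<in> {0..T}" for t
    unfolding F2_def by (rule prim_deriv[OF c2 that])
  have dV: "(V has_vector_derivative V' t) (at t within {t0..t0+h})" if t: "t \<in> {t0..t0+h}" for t
  proof -
    have dA: "(A has_real_derivative f1 t) (at t within {t0..t0+h})"
      unfolding A_def using DERIV_subset[OF dF1 sub] t sub
      by (auto intro!: derivative_eq_intros)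
    have dB: "(B has_real_derivative f2 t) (at t within {t0..t0+h})"
      unfolding B_def using DERIV_subset[OF dF2 sub] t sub
      by (auto intro!: derivative_eq_intros)
    have e1: "(E1 has_vector_derivative f1 t *\<^sub>R (K1 * E1 t)) (at t within {t0..t0+h})"
      unfolding E1_def by (rule exp_chain[OF dA])
    have e2: "(E2 has_vector_derivative f2 t *\<^sub>R (K2 * E2 t)) (at t within {t0..t0+h})"
      unfolding E2_def by (rule exp_chain[OF dB])
    show ?thesis unfolding V_def V'_def by (rule has_vector_derivative_mult[OF e2 e1])
  qed
  have isV: "isom (V t)" for t
    unfolding V_def E1_def E2_def by (intro isom_mult exp_isom sk1 sk2)
  have R: "norm (app (V' t - (f1 t *\<^sub>R K1 + f2 t *\<^sub>R K2) * V t) y) \<le> p t * norm y"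
    if t: "t \<in> {t0..t0+h}" for t y
  proof (rule resid1)
    show "V' t - (f1 t *\<^sub>R K1 + f2 t *\<^sub>R K2) * V t = (f1 t *\<^sub>R (E2 t * K1 * E2i t - K1)) * V t"
    proof -
      have inv: "E2i t * (E2 t * X) = X" for X unfolding E2_def E2i_def by (rule exp_inv2')
      show ?thesis unfolding V_def V'_def by (simp add: algebra_simps inv)
    qed
    show "isom (V t)" by (rule isV)
    have tT: "t \<in> {0..T}" "t0 \<in> {0..T}" using t sub t0 th by auto
    have bB: "\<bar>B t\<bar> \<le> M2 * (t - t0)"
      unfolding B_def using lip[OF dF2 M2 tT(2) tT(1)] t by auto
    have ad: "norm (E2 t * K1 * E2i t - K1) \<le> (M2 * (t - t0)) * c12"
    proof -
      have "norm (E2 t * K1 * E2i t - K1) \<le> \<bar>B t\<bar> * norm (K2*K1 - K1*K2)"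
        unfolding E2_def E2i_def by (rule AD1[OF sk2])
      also have "\<dots> \<le> (M2 * (t - t0)) * c12"
        using bB c12 by (intro mult_mono) auto
      finally show ?thesis .
    qed
    have "norm (f1 t *\<^sub>R (E2 t * K1 * E2i t - K1)) = \<bar>f1 t\<bar> * norm (E2 t * K1 * E2i t - K1)" by simp
    also have "\<dots> \<le> M1 * ((M2 * (t - t0)) * c12)"
      using M1[OF tT(1)] order_trans[OF abs_ge_zero M1[OF tT(1)]] ad by (intro mult_mono) auto
    also have "\<dots> = p t" by (simp add: p_def M_def algebra_simps)
    finally show "norm (f1 t *\<^sub>R (E2 t * K1 * E2i t - K1)) \<le> p t" .
  qed
  have dP: "(P has_real_derivative p t) (at t within S)" for t S
    unfolding P_def p_def by (auto intro!: derivative_eq_intros simp: field_simps)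
  have V0: "V t0 = 1" by (simp add: V_def E1_def E2_def A_def B_def)
  have V1: "V (t0 + h) = exp (integral {t0..t0 + h} f2 *\<^sub>R K2) * exp (integral {t0..t0 + h} f1 *\<^sub>R K1)"
    using prim_diff[OF c1 t0, of "t0+h"] prim_diff[OF c2 t0, of "t0+h"] h th
    by (simp add: V_def E1_def E2_def A_def B_def F1_def F2_def)
  have P1: "P (t0 + h) - P t0 = M1 * M2 * c12 / 2 * h\<^sup>2"
    by (simp add: P_def M_def power2_eq_square field_simps)
  show ?thesis
    by (rule exI[of _ V], rule exI[of _ V'], rule exI[of _ p], rule exI[of _ P])
       (use dV R dP V0 V1 P1 in auto)
qed

lemma deriv_sub:
  assumes "\<And>t. t \<in> {0..T} \<Longrightarrow> (F has_real_derivative F' t) (at t within {0..T})"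
    and "S \<subseteq> {0..T}" "t \<in> S"
  shows "(F has_vector_derivative F' t) (at t within S)"
  using has_field_derivative_subset[OF assms(1) assms(2)] assms(2,3)
  by (auto simp: has_real_derivative_iff_has_vector_derivative)

lemma lin_deriv: "((\<lambda>s. F s - (s - u) * c) has_vector_derivative (d - c)) (at t within S)"
  if "(F has_vector_derivative d) (at t within S)" for F :: "real \<Rightarrow> real"
proof -
  have "((\<lambda>s. (s - u) * c) has_real_derivative c) (at t within S)"
    by (auto intro!: derivative_eq_intros)
  hence "((\<lambda>s. (s - u) * c) has_vector_derivative c) (at t within S)"
    by (simp add: has_real_derivative_iff_has_vector_derivative)
  from has_vector_derivative_diff[OF that this] show ?thesis by simp
qed

lemma taylor2:
  fixes f :: "real \<Rightarrow> real"
  assumes d: "\<And>t. t \<in> {0..T} \<Longrightarrow> (f has_real_derivative f' t) (at t within {0..T})"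
    and d': "\<And>t. t \<in> {0..T} \<Longrightarrow> (f' has_real_derivative f'' t) (at t within {0..T})"
    and Q: "\<And>t. t \<in> {0..T} \<Longrightarrow> \<bar>f'' t\<bar> \<le> Q"
    and u: "u \<in> {0..T}" and v: "v \<in> {0..T}" and uv: "u \<le> v"
  shows "\<bar>f v - f u - (v - u) * f' u\<bar> \<le> Q * (v - u)\<^sup>2 / 2"
proof -
  have sub: "{u..v} \<subseteq> {0..T}" using u v by auto
  have "norm ((f v - (v - u) * f' u) - (f u - (u - u) * f' u)) \<le> Q * (v - u)\<^sup>2 / 2 - Q * (u - u)\<^sup>2 / 2"
  proof (rule BND[OF uv, where f'="\<lambda>s. f' s - f' u" and g'="\<lambda>s. Q * (s - u)"])
    fix t assume t: "t \<in> {u..v}"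
    show "((\<lambda>s. f s - (s - u) * f' u) has_vector_derivative f' t - f' u) (at t within {u..v})"
      by (rule lin_deriv[OF deriv_sub[OF d sub t]])
    show "((\<lambda>s. Q * (s - u)\<^sup>2 / 2) has_real_derivative Q * (t - u)) (at t within {u..v})"
      by (auto intro!: derivative_eq_intros)
    have "\<bar>f' t - f' u\<bar> \<le> Q * (t - u)"
      using lip[OF d' Q, of u t] t sub u by auto
    thus "norm (f' t - f' u) \<le> Q * (t - u)" by simp
  qed
  thus ?thesis by (simp add: algebra_simps)
qed

lemma int_lin_right:
  fixes F f :: "real \<Rightarrow> real"
  assumes d: "\<And>t. t \<in> {0..T} \<Longrightarrow> (F has_real_derivative f t) (at t within {0..T})"
    and d': "\<And>t. t \<in> {0..T} \<Longrightarrow> (f has_real_derivative f' t) (at t within {0..T})"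
    and D: "\<And>t. t \<in> {0..T} \<Longrightarrow> \<bar>f' t\<bar> \<le> D"
    and u: "u \<in> {0..T}" and v: "v \<in> {0..T}" and uv: "u \<le> v"
  shows "\<bar>F v - F u - (v - u) * f v\<bar> \<le> D * (v - u)\<^sup>2 / 2"
proof -
  have sub: "{u..v} \<subseteq> {0..T}" using u v by auto
  have "norm ((F v - (v - v) * f v) - (F u - (u - v) * f v)) \<le> (- D * (v - v)\<^sup>2 / 2) - (- D * (v - u)\<^sup>2 / 2)"
  proof (rule BND[OF uv, where f'="\<lambda>s. f s - f v" and g'="\<lambda>s. D * (v - s)"])
    fix t assume t: "t \<in> {u..v}"
    show "((\<lambda>s. F s - (s - v) * f v) has_vector_derivative f t - f v) (at t within {u..v})"
      by (rule lin_deriv[OF deriv_sub[OF d sub t]])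
    show "((\<lambda>s. - D * (v - s)\<^sup>2 / 2) has_real_derivative D * (v - t)) (at t within {u..v})"
      by (auto intro!: derivative_eq_intros simp: field_simps)
    have "\<bar>f v - f t\<bar> \<le> D * (v - t)"
      using lip[OF d' D, of t v] t sub v by auto
    thus "norm (f t - f v) \<le> D * (v - t)" by (simp add: abs_minus_commute)
  qed
  thus ?thesis by (simp add: algebra_simps)
qed

lemma int_lin_left:
  fixes F f :: "real \<Rightarrow> real"
  assumes d: "\<And>t. t \<in> {0..T} \<Longrightarrow> (F has_real_derivative f t) (at t within {0..T})"
    and d': "\<And>t. t \<in> {0..T} \<Longrightarrow> (f has_real_derivative f' t) (at t within {0..T})"
    and D: "\<And>t. t \<in> {0..T} \<Longrightarrow> \<bar>f' t\<bar> \<le> D"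
    and u: "u \<in> {0..T}" and v: "v \<in> {0..T}" and uv: "u \<le> v"
  shows "\<bar>F v - F u - (v - u) * f u\<bar> \<le> D * (v - u)\<^sup>2 / 2"
  using taylor2[OF d d' D u v uv] .

lemma mid_deriv:
  fixes f :: "real \<Rightarrow> real"
  assumes d: "\<And>t. t \<in> {0..T} \<Longrightarrow> (f has_real_derivative f' t) (at t within {0..T})"
    and S: "(\<lambda>t. (t + t0) / 2) ` S \<subseteq> {0..T}" and t: "t \<in> S"
  shows "((\<lambda>t. f ((t + t0) / 2)) has_real_derivative f' ((t + t0) / 2) / 2) (at t within S)"
proof -
  have m: "((\<lambda>t. (t + t0) / 2) has_real_derivative 1 / 2) (at t within S)"
    by (auto intro!: derivative_eq_intros)
  have "(f has_real_derivative f' ((t + t0) / 2)) (at ((t + t0) / 2) within (\<lambda>t. (t + t0) / 2) ` S)"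
    by (rule has_field_derivative_subset[OF d S]) (use S t in auto)
  from DERIV_image_chain[OF this m] show ?thesis by (simp add: o_def)
qed

lemma tri6: "norm (a + b + c + d + e - (f::'a::real_normed_vector)) \<le> norm a + norm b + norm c + norm d + norm e + norm f"
proof -
  have "norm (a + b + c + d + e - f) \<le> norm (a + b + c + d + e) + norm f" by (rule norm_triangle_ineq4)
  moreover have "norm (a + b + c + d + e) \<le> norm (a + b + c + d) + norm e" by (rule norm_triangle_ineq)
  moreover have "norm (a + b + c + d) \<le> norm (a + b + c) + norm d" by (rule norm_triangle_ineq)
  moreover have "norm (a + b + c) \<le> norm (a + b) + norm c" by (rule norm_triangle_ineq)
  moreover have "norm (a + b) \<le> norm a + norm b" by (rule norm_triangle_ineq)
  ultimately show ?thesis by linarith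
qed

lemma sq_bound: "\<bar>x\<bar> \<le> (y::real) \<Longrightarrow> x\<^sup>2 \<le> y\<^sup>2"
  by (metis abs_ge_zero abs_le_square_iff abs_of_nonneg order_trans)

lemma s2_step:
  fixes K1 K2 :: "'n::finite endo" and f1 f1' f1'' f2 f2' f2'' :: "real \<Rightarrow> real"
  assumes sk1: "skew K1" and sk2: "skew K2"
    and t0: "0 \<le> t0" and h: "0 \<le> h" and th: "t0 + h \<le> T"
    and d1: "\<And>t. t \<in> {0..T} \<Longrightarrow> (f1 has_real_derivative f1' t) (at t within {0..T})"
    and d1': "\<And>t. t \<in> {0..T} \<Longrightarrow> (f1' has_real_derivative f1'' t) (at t within {0..T})"
    and d2: "\<And>t. t \<in> {0..T} \<Longrightarrow> (f2 has_real_derivative f2' t) (at t within {0..T})"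
    and d2': "\<And>t. t \<in> {0..T} \<Longrightarrow> (f2' has_real_derivative f2'' t) (at t within {0..T})"
    and M1: "\<And>t. t \<in> {0..T} \<Longrightarrow> \<bar>f1 t\<bar> \<le> M1" and D1: "\<And>t. t \<in> {0..T} \<Longrightarrow> \<bar>f1' t\<bar> \<le> D1"
    and Q1: "\<And>t. t \<in> {0..T} \<Longrightarrow> \<bar>f1'' t\<bar> \<le> Q1"
    and M2: "\<And>t. t \<in> {0..T} \<Longrightarrow> \<bar>f2 t\<bar> \<le> M2" and D2: "\<And>t. t \<in> {0..T} \<Longrightarrow> \<bar>f2' t\<bar> \<le> D2"
    and Q2: "\<And>t. t \<in> {0..T} \<Longrightarrow> \<bar>f2'' t\<bar> \<le> Q2"
    and n1: "norm K1 \<le> n1" and n2: "norm K2 \<le> n2" and c12: "norm (K2*K1 - K1*K2) \<le> c12"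
    and c112: "norm (K1*(K1*K2 - K2*K1) - (K1*K2 - K2*K1)*K1) \<le> c112"
    and c221: "norm (K2*(K2*K1 - K1*K2) - (K2*K1 - K1*K2)*K2) \<le> c221"
  shows "\<exists>V V' p P.
        (\<forall>t\<in>{t0..t0 + h}.
            (V has_vector_derivative V' t) (at t within {t0..t0 + h})
          \<and> (\<forall>y. norm (app (V' t - (f1 t *\<^sub>R K1 + f2 t *\<^sub>R K2) * V t) y) \<le> p t * norm y)
          \<and> (P has_real_derivative p t) (at t within {t0..t0 + h}))
        \<and> V t0 = 1
        \<and> V (t0 + h) = exp ((h / 2 * f1 (t0 + h / 2)) *\<^sub>R K1) * exp ((h * f2 (t0 + h / 2)) *\<^sub>R K2)
                     * exp ((h / 2 * f1 (t0 + h / 2)) *\<^sub>R K1)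
        \<and> P (t0 + h) - P t0 \<le> (Q1 * n1 / 8 + Q2 * n2 / 8 + M1 * D2 * c12 / 4 + M1 * M2\<^sup>2 * c221 / 4
                                 + D1 * M2 * c12 / 4 + M1\<^sup>2 * M2 * c112 / 8) / 3 * h ^ 3"
proof -
  define C where "C = Q1 * n1 / 8 + Q2 * n2 / 8 + M1 * D2 * c12 / 4 + M1 * M2\<^sup>2 * c221 / 4
                                 + D1 * M2 * c12 / 4 + M1\<^sup>2 * M2 * c112 / 8"
  define m where "m = (\<lambda>t. (t + t0) / 2)"
  define al where "al = (\<lambda>t. (t - t0) / 2 * f1 (m t))"
  define be where "be = (\<lambda>t. (t - t0) * f2 (m t))"
  define a0 where "a0 = (\<lambda>t. f1 (m t) / 2)"
  define a1 where "a1 = (\<lambda>t. (t - t0) / 4 * f1' (m t))"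
  define al' where "al' = (\<lambda>t. a0 t + a1 t)"
  define be' where "be' = (\<lambda>t. f2 (m t) + (t - t0) / 2 * f2' (m t))"
  define EA where "EA = (\<lambda>t. exp (al t *\<^sub>R K1))"
  define EAi where "EAi = (\<lambda>t. exp ((- al t) *\<^sub>R K1))"
  define EB where "EB = (\<lambda>t. exp (be t *\<^sub>R K2))"
  define EBi where "EBi = (\<lambda>t. exp ((- be t) *\<^sub>R K2))"
  define V where "V = (\<lambda>t. EA t * EB t * EA t)"
  define V' where "V' = (\<lambda>t. (EA t * EB t) * (al' t *\<^sub>R (K1 * EA t))
                         + (EA t * (be' t *\<^sub>R (K2 * EB t)) + (al' t *\<^sub>R (K1 * EA t)) * EB t) * EA t)"
  define p where "p = (\<lambda>t. C * (t - t0)\<^sup>2)"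
  define P where "P = (\<lambda>t. C * (t - t0) ^ 3 / 3)"
  have sub: "{t0..t0+h} \<subseteq> {0..T}" using t0 th by auto
  have msub: "m ` {t0..t0+h} \<subseteq> {0..T}" using t0 th h by (auto simp: m_def)
  have dV: "(V has_vector_derivative V' t) (at t within {t0..t0+h})" if t: "t \<in> {t0..t0+h}" for t
  proof -
    have dal: "(al has_real_derivative al' t) (at t within {t0..t0+h})"
    proof -
      have "((\<lambda>t. (t - t0) / 2 * f1 ((t + t0) / 2)) has_real_derivative
              (1 / 2 * f1 ((t + t0) / 2) + (f1' ((t + t0) / 2) / 2) * ((t - t0) / 2))) (at t within {t0..t0+h})"
        by (rule DERIV_mult[OF _ mid_deriv[OF d1 msub[unfolded m_def] t], THEN DERIV_cong])
           (auto intro!: derivative_eq_intros simp: algebra_simps)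
      thus ?thesis unfolding al_def al'_def a0_def a1_def m_def by (simp add: algebra_simps)
    qed
    have dbe: "(be has_real_derivative be' t) (at t within {t0..t0+h})"
    proof -
      have "((\<lambda>t. (t - t0) * f2 ((t + t0) / 2)) has_real_derivative
              (1 * f2 ((t + t0) / 2) + (f2' ((t + t0) / 2) / 2) * (t - t0))) (at t within {t0..t0+h})"
        by (rule DERIV_mult[OF _ mid_deriv[OF d2 msub[unfolded m_def] t], THEN DERIV_cong])
           (auto intro!: derivative_eq_intros simp: algebra_simps)
      thus ?thesis unfolding be_def be'_def m_def by (simp add: algebra_simps)
    qed
    have eA: "(EA has_vector_derivative al' t *\<^sub>R (K1 * EA t)) (at t within {t0..t0+h})"
      unfolding EA_def by (rule exp_chain[OF dal])
    have eB: "(EB has_vector_derivative be' t *\<^sub>R (K2 * EB t)) (at t within {t0..t0+h})"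
      unfolding EB_def by (rule exp_chain[OF dbe])
    show ?thesis unfolding V_def V'_def
      by (rule has_vector_derivative_mult[OF has_vector_derivative_mult[OF eA eB] eA])
  qed
  have isEA: "isom (EA t)" for t unfolding EA_def by (intro exp_isom sk1)
  have isEB: "isom (EB t)" for t unfolding EB_def by (intro exp_isom sk2)
  have R: "norm (app (V' t - (f1 t *\<^sub>R K1 + f2 t *\<^sub>R K2) * V t) y) \<le> p t * norm y"
    if t: "t \<in> {t0..t0+h}" for t y
  proof -
    define D4 where "D4 = (2 * al' t - f1 t) *\<^sub>R K1 + (be' t - f2 t) *\<^sub>R K2
          + al' t *\<^sub>R (EB t * K1 * EBi t - K1) - f2 t *\<^sub>R (EAi t * K2 * EA t - K2)"
    define r2 where "r2 = EB t * K1 * EBi t - K1 - be t *\<^sub>R (K2*K1 - K1*K2)"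
    define ps where "ps = EAi t * K2 * EA t - K2 - (- al t) *\<^sub>R (K1*K2 - K2*K1)"
    have id1: "V' t - (f1 t *\<^sub>R K1 + f2 t *\<^sub>R K2) * V t = EA t * D4 * (EB t * EA t)"
    proof -
      have c1: "K1 * EA t = EA t * K1" unfolding EA_def by (rule exp_comm)
      have c1': "K1 * (EA t * X) = EA t * (K1 * X)" for X by (simp add: mult.assoc[symmetric] c1)
      have i1: "EA t * (EAi t * X) = X" for X unfolding EA_def EAi_def by (rule exp_inv1')
      have i2: "EBi t * (EB t * X) = X" for X unfolding EB_def EBi_def by (rule exp_inv2')
      have tw: "(c * 2) *\<^sub>R X = c *\<^sub>R X + c *\<^sub>R X" for c :: real and X :: "'n endo"
        by (metis mult_2_right scaleR_left_distrib)
      show ?thesis unfolding V_def V'_def D4_def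
        by (simp add: algebra_simps c1 c1' i1 i2 tw)
    qed
    have id2: "D4 = (2 * al' t - f1 t) *\<^sub>R K1 + (be' t - f2 t) *\<^sub>R K2
          + (a0 t * be t - f2 t * al t) *\<^sub>R (K2*K1 - K1*K2) + a0 t *\<^sub>R r2
          + a1 t *\<^sub>R (EB t * K1 * EBi t - K1) - f2 t *\<^sub>R ps"
      unfolding D4_def r2_def ps_def al'_def by (simp add: algebra_simps)
    define \<tau> where "\<tau> = t - t0"
    have tau: "0 \<le> \<tau>" using t by (simp add: \<tau>_def)
    have tT: "t \<in> {0..T}" using t sub by auto
    have mT: "m t \<in> {0..T}" using msub t by (meson image_subset_iff)
    have mt: "m t \<le> t" "t - m t = \<tau> / 2" using t by (auto simp: m_def \<tau>_def field_simps)
    have M1p: "0 \<le> M1" using M1[OF tT] by linarith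
    have M2p: "0 \<le> M2" using M2[OF tT] by linarith
    have D1p: "0 \<le> D1" using D1[OF tT] by linarith
    have D2p: "0 \<le> D2" using D2[OF tT] by linarith
    have Q1p: "0 \<le> Q1" using Q1[OF tT] by linarith
    have Q2p: "0 \<le> Q2" using Q2[OF tT] by linarith
    have n1p: "0 \<le> n1" using n1 norm_ge_zero order_trans by blast
    have n2p: "0 \<le> n2" using n2 norm_ge_zero order_trans by blast
    have c12p: "0 \<le> c12" using c12 norm_ge_zero order_trans by blast
    have c112p: "0 \<le> c112" using c112 norm_ge_zero order_trans by blast
    have c221p: "0 \<le> c221" using c221 norm_ge_zero order_trans by blast
    have bbe: "\<bar>be t\<bar> \<le> \<tau> * M2"
      unfolding be_def \<tau>_def[symmetric] using M2[OF mT] tau by (simp add: abs_mult mult_left_mono)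
    have bal: "\<bar>al t\<bar> \<le> \<tau> / 2 * M1"
      unfolding al_def \<tau>_def[symmetric] using M1[OF mT] tau by (simp add: abs_mult mult_left_mono)
    have b1: "norm ((2 * al' t - f1 t) *\<^sub>R K1) \<le> Q1 * n1 / 8 * \<tau>\<^sup>2"
    proof -
      have "2 * al' t - f1 t = - (f1 t - f1 (m t) - (t - m t) * f1' (m t))"
        unfolding al'_def a0_def a1_def m_def by (simp add: field_simps)
      hence "\<bar>2 * al' t - f1 t\<bar> = \<bar>f1 t - f1 (m t) - (t - m t) * f1' (m t)\<bar>"
        by (simp only: abs_minus_cancel)
      hence "\<bar>2 * al' t - f1 t\<bar> \<le> Q1 * (t - m t)\<^sup>2 / 2"
        using taylor2[OF d1 d1' Q1 mT tT mt(1)] by simp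
      also have "\<dots> = Q1 * \<tau>\<^sup>2 / 8" by (simp add: mt(2) power2_eq_square)
      finally have "\<bar>2 * al' t - f1 t\<bar> \<le> Q1 * \<tau>\<^sup>2 / 8" .
      hence "\<bar>2 * al' t - f1 t\<bar> * norm K1 \<le> (Q1 * \<tau>\<^sup>2 / 8) * n1"
        by (rule mult_mono) (use n1 Q1p in auto)
      thus ?thesis by (simp only: norm_scaleR) (simp add: field_simps)
    qed
    have b2: "norm ((be' t - f2 t) *\<^sub>R K2) \<le> Q2 * n2 / 8 * \<tau>\<^sup>2"
    proof -
      have "be' t - f2 t = - (f2 t - f2 (m t) - (t - m t) * f2' (m t))"
        unfolding be'_def m_def by (simp add: field_simps)
      hence "\<bar>be' t - f2 t\<bar> = \<bar>f2 t - f2 (m t) - (t - m t) * f2' (m t)\<bar>"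
        by (simp only: abs_minus_cancel)
      hence "\<bar>be' t - f2 t\<bar> \<le> Q2 * (t - m t)\<^sup>2 / 2"
        using taylor2[OF d2 d2' Q2 mT tT mt(1)] by simp
      also have "\<dots> = Q2 * \<tau>\<^sup>2 / 8" by (simp add: mt(2) power2_eq_square)
      finally have "\<bar>be' t - f2 t\<bar> \<le> Q2 * \<tau>\<^sup>2 / 8" .
      hence "\<bar>be' t - f2 t\<bar> * norm K2 \<le> (Q2 * \<tau>\<^sup>2 / 8) * n2"
        by (rule mult_mono) (use n2 Q2p in auto)
      thus ?thesis by (simp only: norm_scaleR) (simp add: field_simps)
    qed
    have b3: "norm ((a0 t * be t - f2 t * al t) *\<^sub>R (K2*K1 - K1*K2)) \<le> M1 * D2 * c12 / 4 * \<tau>\<^sup>2"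
    proof -
      have "a0 t * be t - f2 t * al t = \<tau> / 2 * f1 (m t) * (f2 (m t) - f2 t)"
        unfolding a0_def be_def al_def \<tau>_def by (simp add: field_simps)
      hence "\<bar>a0 t * be t - f2 t * al t\<bar> = \<bar>\<tau> / 2 * f1 (m t) * (f2 (m t) - f2 t)\<bar>"
        by (simp only:)
      also have "\<dots> = \<tau> / 2 * \<bar>f1 (m t)\<bar> * \<bar>f2 t - f2 (m t)\<bar>"
        using tau by (simp add: abs_mult abs_minus_commute)
      also have "\<dots> \<le> \<tau> / 2 * M1 * (D2 * (t - m t))"
        using M1[OF mT] lip[OF d2 D2 mT tT mt(1)] tau M1p
        by (intro mult_mono mult_left_mono) auto
      also have "\<dots> = M1 * D2 / 4 * \<tau>\<^sup>2" by (simp only: mt(2)) (simp add: power2_eq_square field_simps)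
      finally have "\<bar>a0 t * be t - f2 t * al t\<bar> * norm (K2*K1 - K1*K2) \<le> (M1 * D2 / 4 * \<tau>\<^sup>2) * c12"
        by (rule mult_mono) (use c12 M1p D2p in auto)
      thus ?thesis by (simp only: norm_scaleR) (simp add: field_simps)
    qed
    have b4: "norm (a0 t *\<^sub>R r2) \<le> M1 * M2\<^sup>2 * c221 / 4 * \<tau>\<^sup>2"
    proof -
      have "norm r2 \<le> (be t)\<^sup>2 / 2 * c221"
      proof -
        have "norm r2 \<le> (be t)\<^sup>2 / 2 * norm (K2*(K2*K1 - K1*K2) - (K2*K1 - K1*K2)*K2)"
          unfolding r2_def EB_def EBi_def by (rule AD2[OF sk2])
        also have "\<dots> \<le> (be t)\<^sup>2 / 2 * c221" by (intro mult_left_mono c221) simp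
        finally show ?thesis .
      qed
      also have "\<dots> \<le> (\<tau> * M2)\<^sup>2 / 2 * c221"
        using sq_bound[OF bbe] c221p by (intro mult_right_mono divide_right_mono) auto
      finally have r2b: "norm r2 \<le> (\<tau> * M2)\<^sup>2 / 2 * c221" .
      have "\<bar>a0 t\<bar> \<le> M1 / 2" unfolding a0_def using M1[OF mT] by simp
      hence "\<bar>a0 t\<bar> * norm r2 \<le> M1 / 2 * ((\<tau> * M2)\<^sup>2 / 2 * c221)"
        by (rule mult_mono[OF _ r2b]) (use M1p in auto)
      thus ?thesis by (simp only: norm_scaleR) (simp add: power2_eq_square field_simps)
    qed
    have b5: "norm (a1 t *\<^sub>R (EB t * K1 * EBi t - K1)) \<le> D1 * M2 * c12 / 4 * \<tau>\<^sup>2"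
    proof -
      have "norm (EB t * K1 * EBi t - K1) \<le> \<bar>be t\<bar> * norm (K2*K1 - K1*K2)"
        unfolding EB_def EBi_def by (rule AD1[OF sk2])
      also have "\<dots> \<le> (\<tau> * M2) * c12" by (rule mult_mono[OF bbe c12]) (use tau M2p in auto)
      finally have e: "norm (EB t * K1 * EBi t - K1) \<le> (\<tau> * M2) * c12" .
      have "\<bar>a1 t\<bar> \<le> \<tau> / 4 * D1" unfolding a1_def \<tau>_def[symmetric]
        using D1[OF mT] tau by (simp add: abs_mult mult_left_mono)
      hence "\<bar>a1 t\<bar> * norm (EB t * K1 * EBi t - K1) \<le> (\<tau> / 4 * D1) * ((\<tau> * M2) * c12)"
        by (rule mult_mono[OF _ e]) (use tau D1p in auto)
      thus ?thesis by (simp only: norm_scaleR) (simp add: power2_eq_square field_simps)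
    qed
    have b6: "norm (f2 t *\<^sub>R ps) \<le> M1\<^sup>2 * M2 * c112 / 8 * \<tau>\<^sup>2"
    proof -
      have "norm ps \<le> (- al t)\<^sup>2 / 2 * norm (K1*(K1*K2 - K2*K1) - (K1*K2 - K2*K1)*K1)"
        unfolding ps_def EA_def EAi_def using AD2[OF sk1, of "- al t" K2] by simp
      also have "\<dots> \<le> (\<tau> / 2 * M1)\<^sup>2 / 2 * c112"
        using sq_bound[OF bal] c112 c112p by (intro mult_mono divide_right_mono) auto
      finally have pb: "norm ps \<le> (\<tau> / 2 * M1)\<^sup>2 / 2 * c112" .
      have "\<bar>f2 t\<bar> * norm ps \<le> M2 * ((\<tau> / 2 * M1)\<^sup>2 / 2 * c112)"
        by (rule mult_mono[OF M2[OF tT] pb]) (use M2p in auto)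
      thus ?thesis by (simp only: norm_scaleR) (simp add: power2_eq_square field_simps)
    qed
    have "norm D4 \<le> p t"
    proof -
      have "norm D4 \<le> Q1 * n1 / 8 * \<tau>\<^sup>2 + Q2 * n2 / 8 * \<tau>\<^sup>2 + M1 * D2 * c12 / 4 * \<tau>\<^sup>2
                 + M1 * M2\<^sup>2 * c221 / 4 * \<tau>\<^sup>2 + D1 * M2 * c12 / 4 * \<tau>\<^sup>2 + M1\<^sup>2 * M2 * c112 / 8 * \<tau>\<^sup>2"
        unfolding id2 using tri6 b1 b2 b3 b4 b5 b6 by (smt (verit))
      also have "\<dots> = p t" by (simp add: p_def C_def \<tau>_def algebra_simps)
      finally show ?thesis .
    qed
    thus ?thesis
      by (intro resid2[OF id1 isEA isom_mult[OF isEB isEA]])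
  qed
  have dP: "(P has_real_derivative p t) (at t within S)" for t S
    unfolding P_def p_def by (auto intro!: derivative_eq_intros simp: field_simps power2_eq_square power3_eq_cube)
  have V0: "V t0 = 1" by (simp add: V_def EA_def EB_def al_def be_def)
  have mh: "m (t0 + h) = t0 + h / 2" by (simp add: m_def field_simps)
  have V1: "V (t0 + h) = exp ((h / 2 * f1 (t0 + h / 2)) *\<^sub>R K1) * exp ((h * f2 (t0 + h / 2)) *\<^sub>R K2)
                     * exp ((h / 2 * f1 (t0 + h / 2)) *\<^sub>R K1)"
    by (simp add: V_def EA_def EB_def al_def be_def mh)
  have P1: "P (t0 + h) - P t0 = C / 3 * h ^ 3"
    by (simp add: P_def)
  show ?thesis
    by (rule exI[of _ V], rule exI[of _ V'], rule exI[of _ p], rule exI[of _ P])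
       (use dV R dP V0 V1 P1 in \<open>auto simp: C_def\<close>)
qed

lemma tri3m: "norm (x + y - z) \<le> norm x + norm y + norm (z::'a::real_normed_vector)"
  using norm_triangle_ineq4[of "x+y" z] norm_triangle_ineq[of x y] by linarith

lemma g2_step:
  fixes K1 K2 :: "'n::finite endo" and f1 f1' f2 f2' :: "real \<Rightarrow> real"
  assumes sk1: "skew K1" and sk2: "skew K2"
    and t0: "0 \<le> t0" and h: "0 \<le> h" and th: "t0 + h \<le> T"
    and c1: "continuous_on {0..T} f1" and c2: "continuous_on {0..T} f2"
    and d1: "\<And>t. t \<in> {0..T} \<Longrightarrow> (f1 has_real_derivative f1' t) (at t within {0..T})"
    and d2: "\<And>t. t \<in> {0..T} \<Longrightarrow> (f2 has_real_derivative f2' t) (at t within {0..T})"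
    and M1: "\<And>t. t \<in> {0..T} \<Longrightarrow> \<bar>f1 t\<bar> \<le> M1" and D1: "\<And>t. t \<in> {0..T} \<Longrightarrow> \<bar>f1' t\<bar> \<le> D1"
    and M2: "\<And>t. t \<in> {0..T} \<Longrightarrow> \<bar>f2 t\<bar> \<le> M2" and D2: "\<And>t. t \<in> {0..T} \<Longrightarrow> \<bar>f2' t\<bar> \<le> D2"
    and c12: "norm (K2*K1 - K1*K2) \<le> c12"
    and c112: "norm (K1*(K1*K2 - K2*K1) - (K1*K2 - K2*K1)*K1) \<le> c112"
    and c221: "norm (K2*(K2*K1 - K1*K2) - (K2*K1 - K1*K2)*K2) \<le> c221"
  shows "\<exists>V V' p P.
        (\<forall>t\<in>{t0..t0 + h}.
            (V has_vector_derivative V' t) (at t within {t0..t0 + h})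
          \<and> (\<forall>y. norm (app (V' t - (f1 t *\<^sub>R K1 + f2 t *\<^sub>R K2) * V t) y) \<le> p t * norm y)
          \<and> (P has_real_derivative p t) (at t within {t0..t0 + h}))
        \<and> V t0 = 1
        \<and> V (t0 + h) = exp (integral {t0 + h / 2..t0 + h} f1 *\<^sub>R K1) * exp (integral {t0..t0 + h} f2 *\<^sub>R K2)
                     * exp (integral {t0..t0 + h / 2} f1 *\<^sub>R K1)
        \<and> P (t0 + h) - P t0 \<le> (M1 * D2 * c12 / 4 + D1 * M2 * c12 / 8 + M1 * M2\<^sup>2 * c221 / 4
                                 + M1\<^sup>2 * M2 * c112 / 8) / 3 * h ^ 3"
proof -
  define C where "C = M1 * D2 * c12 / 4 + D1 * M2 * c12 / 8 + M1 * M2\<^sup>2 * c221 / 4 + M1\<^sup>2 * M2 * c112 / 8"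
  define F1 where "F1 = (\<lambda>t. integral {0..t} f1)"
  define F2 where "F2 = (\<lambda>t. integral {0..t} f2)"
  define m where "m = (\<lambda>t. (t + t0) / 2)"
  define aL where "aL = (\<lambda>t. F1 t - F1 (m t))"
  define aR where "aR = (\<lambda>t. F1 (m t) - F1 t0)"
  define be where "be = (\<lambda>t. F2 t - F2 t0)"
  define aL' where "aL' = (\<lambda>t. f1 t - f1 (m t) / 2)"
  define aR' where "aR' = (\<lambda>t. f1 (m t) / 2)"
  define EL where "EL = (\<lambda>t. exp (aL t *\<^sub>R K1))"
  define ELi where "ELi = (\<lambda>t. exp ((- aL t) *\<^sub>R K1))"
  define ER where "ER = (\<lambda>t. exp (aR t *\<^sub>R K1))"
  define EB where "EB = (\<lambda>t. exp (be t *\<^sub>R K2))"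
  define EBi where "EBi = (\<lambda>t. exp ((- be t) *\<^sub>R K2))"
  define V where "V = (\<lambda>t. EL t * EB t * ER t)"
  define V' where "V' = (\<lambda>t. (EL t * EB t) * (aR' t *\<^sub>R (K1 * ER t))
                         + (EL t * (f2 t *\<^sub>R (K2 * EB t)) + (aL' t *\<^sub>R (K1 * EL t)) * EB t) * ER t)"
  define p where "p = (\<lambda>t. C * (t - t0)\<^sup>2)"
  define P where "P = (\<lambda>t. C * (t - t0) ^ 3 / 3)"
  have sub: "{t0..t0+h} \<subseteq> {0..T}" using t0 th by auto
  have msub: "m ` {t0..t0+h} \<subseteq> {0..T}" using t0 th h by (auto simp: m_def)
  have dF1: "(F1 has_real_derivative f1 t) (at t within {0..T})" if "t \<in> {0..T}" for t
    unfolding F1_def by (rule prim_deriv[OF c1 that])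
  have dF2: "(F2 has_real_derivative f2 t) (at t within {0..T})" if "t \<in> {0..T}" for t
    unfolding F2_def by (rule prim_deriv[OF c2 that])
  have dV: "(V has_vector_derivative V' t) (at t within {t0..t0+h})" if t: "t \<in> {t0..t0+h}" for t
  proof -
    have dFm: "((\<lambda>t. F1 (m t)) has_real_derivative f1 (m t) / 2) (at t within {t0..t0+h})"
      unfolding m_def by (rule mid_deriv[OF dF1 msub[unfolded m_def] t])
    have dF1s: "(F1 has_real_derivative f1 t) (at t within {t0..t0+h})"
      using DERIV_subset[OF dF1 sub] t sub by auto
    have dF2s: "(F2 has_real_derivative f2 t) (at t within {t0..t0+h})"
      using DERIV_subset[OF dF2 sub] t sub by auto
    have daL: "(aL has_real_derivative aL' t) (at t within {t0..t0+h})"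
      unfolding aL_def aL'_def using DERIV_diff[OF dF1s dFm] by simp
    have daR: "(aR has_real_derivative aR' t) (at t within {t0..t0+h})"
      unfolding aR_def aR'_def using DERIV_diff[OF dFm DERIV_const[of "F1 t0"]] by simp
    have dbe: "(be has_real_derivative f2 t) (at t within {t0..t0+h})"
      unfolding be_def using DERIV_diff[OF dF2s DERIV_const[of "F2 t0"]] by simp
    have eL: "(EL has_vector_derivative aL' t *\<^sub>R (K1 * EL t)) (at t within {t0..t0+h})"
      unfolding EL_def by (rule exp_chain[OF daL])
    have eR: "(ER has_vector_derivative aR' t *\<^sub>R (K1 * ER t)) (at t within {t0..t0+h})"
      unfolding ER_def by (rule exp_chain[OF daR])
    have eB: "(EB has_vector_derivative f2 t *\<^sub>R (K2 * EB t)) (at t within {t0..t0+h})"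
      unfolding EB_def by (rule exp_chain[OF dbe])
    show ?thesis unfolding V_def V'_def
      by (rule has_vector_derivative_mult[OF has_vector_derivative_mult[OF eL eB] eR])
  qed
  have isEL: "isom (EL t)" for t unfolding EL_def by (intro exp_isom sk1)
  have isER: "isom (ER t)" for t unfolding ER_def by (intro exp_isom sk1)
  have isEB: "isom (EB t)" for t unfolding EB_def by (intro exp_isom sk2)
  have R: "norm (app (V' t - (f1 t *\<^sub>R K1 + f2 t *\<^sub>R K2) * V t) y) \<le> p t * norm y"
    if t: "t \<in> {t0..t0+h}" for t y
  proof -
    define D4 where "D4 = (aL' t + aR' t - f1 t) *\<^sub>R K1 + (f2 t - f2 t) *\<^sub>R K2
          + aR' t *\<^sub>R (EB t * K1 * EBi t - K1) - f2 t *\<^sub>R (ELi t * K2 * EL t - K2)"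
    define r2 where "r2 = EB t * K1 * EBi t - K1 - be t *\<^sub>R (K2*K1 - K1*K2)"
    define ps where "ps = ELi t * K2 * EL t - K2 - (- aL t) *\<^sub>R (K1*K2 - K2*K1)"
    have id1: "V' t - (f1 t *\<^sub>R K1 + f2 t *\<^sub>R K2) * V t = EL t * D4 * (EB t * ER t)"
    proof -
      have c1: "K1 * EL t = EL t * K1" unfolding EL_def by (rule exp_comm)
      have c1': "K1 * (EL t * X) = EL t * (K1 * X)" for X by (simp add: mult.assoc[symmetric] c1)
      have i1: "EL t * (ELi t * X) = X" for X unfolding EL_def ELi_def by (rule exp_inv1')
      have i2: "EBi t * (EB t * X) = X" for X unfolding EB_def EBi_def by (rule exp_inv2')
      show ?thesis unfolding V_def V'_def D4_def
        by (simp add: algebra_simps c1 c1' i1 i2)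
    qed
    have id2: "D4 = (aR' t * be t - f2 t * aL t) *\<^sub>R (K2*K1 - K1*K2) + aR' t *\<^sub>R r2 - f2 t *\<^sub>R ps"
      unfolding D4_def r2_def ps_def aL'_def aR'_def by (simp add: algebra_simps)
    define \<tau> where "\<tau> = t - t0"
    have tau: "0 \<le> \<tau>" using t by (simp add: \<tau>_def)
    have tT: "t \<in> {0..T}" using t sub by auto
    have t0T: "t0 \<in> {0..T}" using t0 th h by auto
    have mT: "m t \<in> {0..T}" using msub t by (meson image_subset_iff)
    have mt: "m t \<le> t" "t - m t = \<tau> / 2" using t by (auto simp: m_def \<tau>_def field_simps)
    have M1p: "0 \<le> M1" using M1[OF tT] by linarith
    have M2p: "0 \<le> M2" using M2[OF tT] by linarith
    have D1p: "0 \<le> D1" using D1[OF tT] by linarith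
    have D2p: "0 \<le> D2" using D2[OF tT] by linarith
    have c12p: "0 \<le> c12" using c12 norm_ge_zero order_trans by blast
    have c112p: "0 \<le> c112" using c112 norm_ge_zero order_trans by blast
    have c221p: "0 \<le> c221" using c221 norm_ge_zero order_trans by blast
    have bbe: "\<bar>be t\<bar> \<le> \<tau> * M2"
      unfolding be_def \<tau>_def using lip[OF dF2 M2 t0T tT] t by (simp add: mult.commute)
    have baL: "\<bar>aL t\<bar> \<le> \<tau> / 2 * M1"
      unfolding aL_def using lip[OF dF1 M1 mT tT mt(1)] mt(2) by (simp add: mult.commute)
    have b3: "norm ((aR' t * be t - f2 t * aL t) *\<^sub>R (K2*K1 - K1*K2)) \<le> (M1 * D2 / 4 + D1 * M2 / 8) * c12 * \<tau>\<^sup>2"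
    proof -
      define X where "X = F2 t - F2 t0 - (t - t0) * f2 t"
      define Y where "Y = F1 t - F1 (m t) - (t - m t) * f1 (m t)"
      have X: "\<bar>X\<bar> \<le> D2 * \<tau>\<^sup>2 / 2"
        unfolding X_def \<tau>_def by (rule int_lin_right[OF dF2 d2 D2 t0T tT]) (use t in auto)
      have Y: "\<bar>Y\<bar> \<le> D1 * \<tau>\<^sup>2 / 8"
      proof -
        have "\<bar>Y\<bar> \<le> D1 * (t - m t)\<^sup>2 / 2"
          unfolding Y_def by (rule int_lin_left[OF dF1 d1 D1 mT tT mt(1)])
        thus ?thesis by (simp add: mt(2) power2_eq_square)
      qed
      have eq: "aR' t * be t - f2 t * aL t = f1 (m t) / 2 * X - f2 t * Y"
        unfolding aR'_def be_def aL_def X_def Y_def m_def by (simp add: field_simps)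
      have "\<bar>aR' t * be t - f2 t * aL t\<bar> \<le> \<bar>f1 (m t)\<bar> / 2 * \<bar>X\<bar> + \<bar>f2 t\<bar> * \<bar>Y\<bar>"
        unfolding eq by (simp add: abs_mult abs_triangle_ineq4[THEN order_trans])
      also have "\<dots> \<le> M1 / 2 * (D2 * \<tau>\<^sup>2 / 2) + M2 * (D1 * \<tau>\<^sup>2 / 8)"
        using M1[OF mT] M2[OF tT] X Y M1p M2p
        by (intro add_mono mult_mono divide_right_mono) auto
      also have "\<dots> = (M1 * D2 / 4 + D1 * M2 / 8) * \<tau>\<^sup>2" by (simp add: field_simps)
      finally have "\<bar>aR' t * be t - f2 t * aL t\<bar> * norm (K2*K1 - K1*K2) \<le> ((M1 * D2 / 4 + D1 * M2 / 8) * \<tau>\<^sup>2) * c12"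
        by (rule mult_mono[OF _ c12]) (use M1p D2p D1p M2p in auto)
      thus ?thesis by (simp only: norm_scaleR) (simp add: field_simps)
    qed
    have b4: "norm (aR' t *\<^sub>R r2) \<le> M1 * M2\<^sup>2 * c221 / 4 * \<tau>\<^sup>2"
    proof -
      have "norm r2 \<le> (be t)\<^sup>2 / 2 * c221"
      proof -
        have "norm r2 \<le> (be t)\<^sup>2 / 2 * norm (K2*(K2*K1 - K1*K2) - (K2*K1 - K1*K2)*K2)"
          unfolding r2_def EB_def EBi_def by (rule AD2[OF sk2])
        also have "\<dots> \<le> (be t)\<^sup>2 / 2 * c221" by (intro mult_left_mono c221) simp
        finally show ?thesis .
      qed
      also have "\<dots> \<le> (\<tau> * M2)\<^sup>2 / 2 * c221"
        using sq_bound[OF bbe] c221p by (intro mult_right_mono divide_right_mono) auto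
      finally have r2b: "norm r2 \<le> (\<tau> * M2)\<^sup>2 / 2 * c221" .
      have "\<bar>aR' t\<bar> \<le> M1 / 2" unfolding aR'_def using M1[OF mT] by simp
      hence "\<bar>aR' t\<bar> * norm r2 \<le> M1 / 2 * ((\<tau> * M2)\<^sup>2 / 2 * c221)"
        by (rule mult_mono[OF _ r2b]) (use M1p in auto)
      thus ?thesis by (simp only: norm_scaleR) (simp add: power2_eq_square field_simps)
    qed
    have b6: "norm (f2 t *\<^sub>R ps) \<le> M1\<^sup>2 * M2 * c112 / 8 * \<tau>\<^sup>2"
    proof -
      have "norm ps \<le> (- aL t)\<^sup>2 / 2 * norm (K1*(K1*K2 - K2*K1) - (K1*K2 - K2*K1)*K1)"
        unfolding ps_def EL_def ELi_def using AD2[OF sk1, of "- aL t" K2] by simp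
      also have "\<dots> \<le> (\<tau> / 2 * M1)\<^sup>2 / 2 * c112"
        using sq_bound[OF baL] c112 c112p by (intro mult_mono divide_right_mono) auto
      finally have pb: "norm ps \<le> (\<tau> / 2 * M1)\<^sup>2 / 2 * c112" .
      have "\<bar>f2 t\<bar> * norm ps \<le> M2 * ((\<tau> / 2 * M1)\<^sup>2 / 2 * c112)"
        by (rule mult_mono[OF M2[OF tT] pb]) (use M2p in auto)
      thus ?thesis by (simp only: norm_scaleR) (simp add: power2_eq_square field_simps)
    qed
    have "norm D4 \<le> p t"
    proof -
      have "norm D4 \<le> (M1 * D2 / 4 + D1 * M2 / 8) * c12 * \<tau>\<^sup>2 + M1 * M2\<^sup>2 * c221 / 4 * \<tau>\<^sup>2 + M1\<^sup>2 * M2 * c112 / 8 * \<tau>\<^sup>2"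
        unfolding id2 using tri3m b3 b4 b6 by (smt (verit))
      also have "\<dots> = p t" by (simp add: p_def C_def \<tau>_def algebra_simps)
      finally show ?thesis .
    qed
    thus ?thesis
      by (intro resid2[OF id1 isEL isom_mult[OF isEB isER]])
  qed
  have dP: "(P has_real_derivative p t) (at t within S)" for t S
    unfolding P_def p_def by (auto intro!: derivative_eq_intros simp: field_simps power2_eq_square power3_eq_cube)
  have V0: "V t0 = 1" by (simp add: V_def EL_def ER_def EB_def aL_def aR_def be_def m_def)
  have mh: "m (t0 + h) = t0 + h / 2" by (simp add: m_def field_simps)
  have V1: "V (t0 + h) = exp (integral {t0 + h / 2..t0 + h} f1 *\<^sub>R K1) * exp (integral {t0..t0 + h} f2 *\<^sub>R K2)
                     * exp (integral {t0..t0 + h / 2} f1 *\<^sub>R K1)"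
  proof -
    have "integral {t0 + h / 2..t0 + h} f1 = F1 (t0 + h) - F1 (t0 + h / 2)"
      unfolding F1_def by (rule prim_diff[OF c1]) (use t0 h th in auto)
    moreover have "integral {t0..t0 + h / 2} f1 = F1 (t0 + h / 2) - F1 t0"
      unfolding F1_def by (rule prim_diff[OF c1]) (use t0 h th in auto)
    moreover have "integral {t0..t0 + h} f2 = F2 (t0 + h) - F2 t0"
      unfolding F2_def by (rule prim_diff[OF c2]) (use t0 h th in auto)
    ultimately show ?thesis by (simp add: V_def EL_def ER_def EB_def aL_def aR_def be_def mh)
  qed
  have P1: "P (t0 + h) - P t0 = C / 3 * h ^ 3"
    by (simp add: P_def)
  show ?thesis
    by (rule exI[of _ V], rule exI[of _ V'], rule exI[of _ p], rule exI[of _ P])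
       (use dV R dP V0 V1 P1 in \<open>auto simp: C_def\<close>)
qed

lemma finish:
  fixes Sm U :: "real \<Rightarrow> complex^'n::finite^'n" and G :: "real \<Rightarrow> 'n endo"
  assumes L: "L \<ge> 1" and T: "T > 0" and dl: "0 \<le> \<delta>"
    and dU: "\<And>t. t \<in> {0..T} \<Longrightarrow> ((\<lambda>t. em (U t)) has_vector_derivative G t * em (U t)) (at t within {0..T})"
    and sk: "\<And>t. t \<in> {0..T} \<Longrightarrow> skew (G t)"
    and U0: "U 0 = mat 1"
    and steps: "\<And>t0. 0 \<le> t0 \<Longrightarrow> t0 + T / real L \<le> T \<Longrightarrow> \<exists>V V' p P.
        (\<forall>t\<in>{t0..t0 + T / real L}.
            (V has_vector_derivative V' t) (at t within {t0..t0 + T / real L})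
          \<and> (\<forall>y. norm (app (V' t - G t * V t) y) \<le> p t * norm y)
          \<and> (P has_real_derivative p t) (at t within {t0..t0 + T / real L}))
        \<and> V t0 = 1 \<and> V (t0 + T / real L) = em (Sm t0)
        \<and> P (t0 + T / real L) - P t0 \<le> \<delta>"
    and isS: "\<And>t. isom (em (Sm t))"
  shows "opn (stepprod Sm (T / real L) L - U T) \<le> real L * \<delta>"
proof -
  define h where "h = T / real L"
  have Lp: "real L > 0" using L by simp
  have hp: "0 \<le> h" using T Lp by (simp add: h_def)
  have LT: "real L * h = T" using Lp by (simp add: h_def)
  have "norm (sp (\<lambda>t. em (Sm t)) h L - em (U (real L * h))) \<le> real L * \<delta>"
  proof (rule assemble[where G=G])
    show "0 \<le> h" by (rule hp)
    show "0 \<le> \<delta>" by (rule dl)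
    show "\<And>t. t \<in> {0..real L * h} \<Longrightarrow> ((\<lambda>t. em (U t)) has_vector_derivative G t * em (U t)) (at t within {0..real L * h})"
      unfolding LT by (rule dU)
    show "\<And>t. t \<in> {0..real L * h} \<Longrightarrow> skew (G t)" unfolding LT by (rule sk)
    show "em (U 0) = 1" by (simp add: U0 em_one)
    show "isom (em (Sm (real k * h)))" for k by (rule isS)
    fix k assume k: "k < L"
    have a: "0 \<le> real k * h" using hp by simp
    have "real k * h + h = real (Suc k) * h" by (simp add: algebra_simps)
    also have "\<dots> \<le> real L * h" using k hp by (intro mult_right_mono) auto
    finally have b: "real k * h + T / real L \<le> T" unfolding LT by (simp add: h_def)
    from steps[OF a b] show "\<exists>V V' p P.
        (\<forall>t\<in>{real k * h..real k * h + h}.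
            (V has_vector_derivative V' t) (at t within {real k * h..real k * h + h})
          \<and> (\<forall>y. norm (app (V' t - G t * V t) y) \<le> p t * norm y)
          \<and> (P has_real_derivative p t) (at t within {real k * h..real k * h + h}))
        \<and> V (real k * h) = 1 \<and> V (real k * h + h) = em (Sm (real k * h))
        \<and> P (real k * h + h) - P (real k * h) \<le> \<delta>"
      unfolding h_def .
  qed
  thus ?thesis
    by (simp add: opn_em em_diff em_stepprod LT h_def[symmetric])
qed

lemma em_Us1: "em (Us1 f1 f2 H1 H2 h t) =
   exp ((f2 (t+h) * h) *\<^sub>R em (cmat (- \<i>) H2)) * exp ((f1 (t+h) * h) *\<^sub>R em (cmat (- \<i>) H1))"
  unfolding Us1_def cmat_ofreal by (simp add: em_mult em_mexp em_scaleR)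

lemma em_Ug1: "em (Ug1 f1 f2 H1 H2 h t) =
   exp (integral {t..t+h} f2 *\<^sub>R em (cmat (- \<i>) H2)) * exp (integral {t..t+h} f1 *\<^sub>R em (cmat (- \<i>) H1))"
  unfolding Ug1_def cmat_ofreal by (simp add: em_mult em_mexp em_scaleR)

lemma em_Us2: "em (Us2 f1 f2 H1 H2 h t) =
   exp ((h / 2 * f1 (t + h/2)) *\<^sub>R em (cmat (- \<i>) H1)) * exp ((h * f2 (t + h/2)) *\<^sub>R em (cmat (- \<i>) H2))
   * exp ((h / 2 * f1 (t + h/2)) *\<^sub>R em (cmat (- \<i>) H1))"
  unfolding Us2_def cmat_ofreal by (simp add: em_mult em_mexp em_scaleR)

lemma em_Ug2: "em (Ug2 f1 f2 H1 H2 h t) =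
   exp (integral {t+h/2..t+h} f1 *\<^sub>R em (cmat (- \<i>) H1)) * exp (integral {t..t+h} f2 *\<^sub>R em (cmat (- \<i>) H2))
   * exp (integral {t..t+h/2} f1 *\<^sub>R em (cmat (- \<i>) H1))"
  unfolding Ug2_def cmat_ofreal by (simp add: em_mult em_mexp em_scaleR)

lemma ex_step_cong:
  fixes \<delta> \<delta>' :: real
  assumes "\<exists>V V' p P. Q V V' p P \<and> V t0 = 1 \<and> V t1 = X \<and> R P \<le> \<delta>" "X = Y" "\<delta> \<le> \<delta>'"
  shows "\<exists>V V' p P. Q V V' p P \<and> V t0 = 1 \<and> V t1 = Y \<and> R P \<le> \<delta>'"
proof -
  from assms(1) obtain V V' p P where a: "Q V V' p P" "V t0 = 1" "V t1 = X" "R P \<le> \<delta>" by blast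
  have "R P \<le> \<delta>'" using a(4) assms(3) by linarith
  thus ?thesis using a assms(2) by blast
qed

lemma opn_nonneg: "0 \<le> opn M" by (simp add: opn_em)

theorem theorem2:
  fixes H1 H2 :: "complex^'n^'n"
    and f1 f1' f1'' f2 f2' f2'' :: "real \<Rightarrow> real"
    and T :: real and L :: nat
    and U :: "real \<Rightarrow> complex^'n^'n"
  assumes herm1: "hermitian H1" and herm2: "hermitian H2"
    and T_pos: "T > 0" and L_ge: "L \<ge> 1"
    and d1: "\<And>t. t \<in> {0..T} \<Longrightarrow> (f1 has_real_derivative f1' t) (at t within {0..T})"
    and d1': "\<And>t. t \<in> {0..T} \<Longrightarrow> (f1' has_real_derivative f1'' t) (at t within {0..T})"
    and c1'': "continuous_on {0..T} f1''"
    and d2: "\<And>t. t \<in> {0..T} \<Longrightarrow> (f2 has_real_derivative f2' t) (at t within {0..T})"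
    and d2': "\<And>t. t \<in> {0..T} \<Longrightarrow> (f2' has_real_derivative f2'' t) (at t within {0..T})"
    and c2'': "continuous_on {0..T} f2''"
    and U0: "U 0 = mat 1"
    and U_ode: "\<And>t. t \<in> {0..T} \<Longrightarrow>
        (U has_vector_derivative
           (cmat (- \<i>) (f1 t *\<^sub>R H1 + f2 t *\<^sub>R H2) ** U t)) (at t within {0..T})"
  shows
    "opn (stepprod (Us1 f1 f2 H1 H2 (T / real L)) (T / real L) L - U T)
       \<le> alpha_s1 T f1 f1' f1'' f2 f2' f2'' H1 H2 * T^2 / real L
         + beta_s1 T f1 f1' f1'' f2 f2' f2'' H1 H2 * T^3 / (real L)^2
   \<and> opn (stepprod (Ug1 f1 f2 H1 H2 (T / real L)) (T / real L) L - U T)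
       \<le> alpha_g1 T f1 f1' f1'' f2 f2' f2'' H1 H2 * T^2 / real L
   \<and> opn (stepprod (Us2 f1 f2 H1 H2 (T / real L)) (T / real L) L - U T)
       \<le> alpha_s2 T f1 f1' f1'' f2 f2' f2'' H1 H2 * T^3 / (real L)^2
         + beta_s2 T f1 f1' f1'' f2 f2' f2'' H1 H2 * T^4 / (real L)^3
         + gamma_s2 T f1 f1' f1'' f2 f2' f2'' H1 H2 * T^5 / (real L)^4
   \<and> opn (stepprod (Ug2 f1 f2 H1 H2 (T / real L)) (T / real L) L - U T)
       \<le> alpha_g2 T f1 f1' f1'' f2 f2' f2'' H1 H2 * T^3 / (real L)^2"
proof -
  define K1 where "K1 = em (cmat (- \<i>) H1)"
  define K2 where "K2 = em (cmat (- \<i>) H2)"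
  have sk1: "skew K1" unfolding K1_def by (rule skew_herm[OF herm1])
  have sk2: "skew K2" unfolding K2_def by (rule skew_herm[OF herm2])
  have skG: "skew (f1 t *\<^sub>R K1 + f2 t *\<^sub>R K2)" for t by (intro skew_add skew_scaleR sk1 sk2)
  have dU: "((\<lambda>t. em (U t)) has_vector_derivative (f1 t *\<^sub>R K1 + f2 t *\<^sub>R K2) * em (U t)) (at t within {0..T})"
    if t: "t \<in> {0..T}" for t
  proof -
    have "((\<lambda>t. em (U t)) has_vector_derivative em (cmat (- \<i>) (f1 t *\<^sub>R H1 + f2 t *\<^sub>R H2) ** U t)) (at t within {0..T})"
      by (rule bounded_linear.has_vector_derivative[OF bounded_linear_em U_ode[OF t]])
    moreover have "em (cmat (- \<i>) (f1 t *\<^sub>R H1 + f2 t *\<^sub>R H2) ** U t) = (f1 t *\<^sub>R K1 + f2 t *\<^sub>R K2) * em (U t)"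
      by (simp add: K1_def K2_def em_mult cmat_add cmat_scaleR em_add em_scaleR)
    ultimately show ?thesis by simp
  qed
  have T0: "0 \<le> T" using T_pos by simp
  have cf1: "continuous_on {0..T} f1" by (rule DERIV_continuous_on[OF d1])
  have cf1': "continuous_on {0..T} f1'" by (rule DERIV_continuous_on[OF d1'])
  have cf2: "continuous_on {0..T} f2" by (rule DERIV_continuous_on[OF d2])
  have cf2': "continuous_on {0..T} f2'" by (rule DERIV_continuous_on[OF d2'])
  define M1 where "M1 = supn T f1"
  define D1 where "D1 = supn T f1'"
  define Q1 where "Q1 = supn T f1''"
  define M2 where "M2 = supn T f2"
  define D2 where "D2 = supn T f2'"
  define Q2 where "Q2 = supn T f2''"
  have bM1: "\<And>t. t \<in> {0..T} \<Longrightarrow> \<bar>f1 t\<bar> \<le> M1" unfolding M1_def by (rule abs_le_supn[OF cf1])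
  have bD1: "\<And>t. t \<in> {0..T} \<Longrightarrow> \<bar>f1' t\<bar> \<le> D1" unfolding D1_def by (rule abs_le_supn[OF cf1'])
  have bQ1: "\<And>t. t \<in> {0..T} \<Longrightarrow> \<bar>f1'' t\<bar> \<le> Q1" unfolding Q1_def by (rule abs_le_supn[OF c1''])
  have bM2: "\<And>t. t \<in> {0..T} \<Longrightarrow> \<bar>f2 t\<bar> \<le> M2" unfolding M2_def by (rule abs_le_supn[OF cf2])
  have bD2: "\<And>t. t \<in> {0..T} \<Longrightarrow> \<bar>f2' t\<bar> \<le> D2" unfolding D2_def by (rule abs_le_supn[OF cf2'])
  have bQ2: "\<And>t. t \<in> {0..T} \<Longrightarrow> \<bar>f2'' t\<bar> \<le> Q2" unfolding Q2_def by (rule abs_le_supn[OF c2''])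
  have pM1: "0 \<le> M1" unfolding M1_def by (rule supn_nonneg[OF T0 cf1])
  have pD1: "0 \<le> D1" unfolding D1_def by (rule supn_nonneg[OF T0 cf1'])
  have pQ1: "0 \<le> Q1" unfolding Q1_def by (rule supn_nonneg[OF T0 c1''])
  have pM2: "0 \<le> M2" unfolding M2_def by (rule supn_nonneg[OF T0 cf2])
  have pD2: "0 \<le> D2" unfolding D2_def by (rule supn_nonneg[OF T0 cf2'])
  have pQ2: "0 \<le> Q2" unfolding Q2_def by (rule supn_nonneg[OF T0 c2''])
  have n1: "norm K1 \<le> opn H1" unfolding K1_def using norm_em_cmat[of "- \<i>" H1] by simp
  have n2: "norm K2 \<le> opn H2" unfolding K2_def using norm_em_cmat[of "- \<i>" H2] by simp
  have k12: "K1 * K2 - K2 * K1 = em (cmat (- \<i> * - \<i>) (comm H1 H2))"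
    unfolding K1_def K2_def by (rule em_cmat_comm)
  have k21: "K2 * K1 - K1 * K2 = em (cmat (- \<i> * - \<i>) (comm H2 H1))"
    unfolding K1_def K2_def by (rule em_cmat_comm)
  have cc12: "norm (K2 * K1 - K1 * K2) \<le> opn (comm H1 H2)"
  proof -
    have "norm (K2 * K1 - K1 * K2) = norm (K1 * K2 - K2 * K1)" by (rule norm_minus_commute)
    also have "\<dots> \<le> cmod (- \<i> * - \<i>) * opn (comm H1 H2)" unfolding k12 by (rule norm_em_cmat)
    finally show ?thesis by simp
  qed
  have cc112: "norm (K1*(K1*K2 - K2*K1) - (K1*K2 - K2*K1)*K1) \<le> opn (comm H1 (comm H1 H2))"
  proof -
    have eq: "K1*(K1*K2 - K2*K1) - (K1*K2 - K2*K1)*K1 = em (cmat (- \<i> * (- \<i> * - \<i>)) (comm H1 (comm H1 H2)))"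
      unfolding k12 unfolding K1_def by (rule em_cmat_comm)
    have "norm (K1*(K1*K2 - K2*K1) - (K1*K2 - K2*K1)*K1) \<le> cmod (- \<i> * (- \<i> * - \<i>)) * opn (comm H1 (comm H1 H2))"
      unfolding eq by (rule norm_em_cmat)
    thus ?thesis by simp
  qed
  have cc221a: "norm (K2*(K2*K1 - K1*K2) - (K2*K1 - K1*K2)*K2) \<le> opn (comm H2 (comm H2 H1))"
  proof -
    have eq: "K2*(K2*K1 - K1*K2) - (K2*K1 - K1*K2)*K2 = em (cmat (- \<i> * (- \<i> * - \<i>)) (comm H2 (comm H2 H1)))"
      unfolding k21 unfolding K2_def by (rule em_cmat_comm)
    have "norm (K2*(K2*K1 - K1*K2) - (K2*K1 - K1*K2)*K2) \<le> cmod (- \<i> * (- \<i> * - \<i>)) * opn (comm H2 (comm H2 H1))"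
      unfolding eq by (rule norm_em_cmat)
    thus ?thesis by simp
  qed
  have cc221b: "norm (K2*(K2*K1 - K1*K2) - (K2*K1 - K1*K2)*K2) \<le> opn (comm H2 (comm H1 H2))"
  proof -
    have e: "K2*(K2*K1 - K1*K2) - (K2*K1 - K1*K2)*K2 = - (K2*(K1*K2 - K2*K1) - (K1*K2 - K2*K1)*K2)"
      by (simp add: algebra_simps)
    have eq: "K2*(K1*K2 - K2*K1) - (K1*K2 - K2*K1)*K2 = em (cmat (- \<i> * (- \<i> * - \<i>)) (comm H2 (comm H1 H2)))"
      unfolding k12 unfolding K2_def by (rule em_cmat_comm)
    have "norm (K2*(K1*K2 - K2*K1) - (K1*K2 - K2*K1)*K2) \<le> cmod (- \<i> * (- \<i> * - \<i>)) * opn (comm H2 (comm H1 H2))"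
      unfolding eq by (rule norm_em_cmat)
    thus ?thesis unfolding e norm_minus_cancel by simp
  qed
  have Lp: "real L > 0" using L_ge by simp
  have hp: "0 \<le> T / real L" using T0 Lp by simp
  have isE: "isom (exp (r *\<^sub>R K))" if "skew K" for r K using exp_isom[OF that] .
  have nn: "0 \<le> opn H1" "0 \<le> opn H2" "0 \<le> opn (comm H1 H2)" "0 \<le> opn (comm H1 (comm H1 H2))"
    "0 \<le> opn (comm H2 (comm H1 H2))" "0 \<le> opn (comm H2 (comm H2 H1))" by (simp_all add: opn_nonneg)
  have isS1: "isom (em (Us1 f1 f2 H1 H2 h t))" for h t
    unfolding em_Us1 K1_def[symmetric] K2_def[symmetric] by (intro isom_mult exp_isom sk1 sk2)
  have isG1: "isom (em (Ug1 f1 f2 H1 H2 h t))" for h t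
    unfolding em_Ug1 K1_def[symmetric] K2_def[symmetric] by (intro isom_mult exp_isom sk1 sk2)
  have isS2: "isom (em (Us2 f1 f2 H1 H2 h t))" for h t
    unfolding em_Us2 K1_def[symmetric] K2_def[symmetric] by (intro isom_mult exp_isom sk1 sk2)
  have isG2: "isom (em (Ug2 f1 f2 H1 H2 h t))" for h t
    unfolding em_Ug2 K1_def[symmetric] K2_def[symmetric] by (intro isom_mult exp_isom sk1 sk2)
  have hp2: "0 \<le> (T / real L)\<^sup>2" and hp3: "0 \<le> (T / real L) ^ 3" using hp by simp_all
  define as1 where "as1 = alpha_s1 T f1 f1' f1'' f2 f2' f2'' H1 H2"
  have as1e: "as1 = (D1 * opn H1 + D2 * opn H2 + M1 * M2 * opn (comm H1 H2)) / 2"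
    unfolding as1_def alpha_s1_def M1_def M2_def D1_def D2_def by (simp add: field_simps)
  have as1p: "0 \<le> as1" unfolding as1e using pM1 pM2 pD1 pD2 nn by simp
  have R1: "opn (stepprod (Us1 f1 f2 H1 H2 (T / real L)) (T / real L) L - U T) \<le> real L * (as1 * (T / real L)\<^sup>2)"
  proof (rule finish[where G="\<lambda>t. f1 t *\<^sub>R K1 + f2 t *\<^sub>R K2"])
    show "1 \<le> L" "0 < T" by (rule L_ge, rule T_pos)
    show "0 \<le> as1 * (T / real L)\<^sup>2" using as1p hp2 by simp
    show "U 0 = mat 1" by (rule U0)
    show "isom (em (Us1 f1 f2 H1 H2 (T / real L) t))" for t by (rule isS1)
    fix t0 assume a0: "0 \<le> t0" and b0: "t0 + T / real L \<le> T"
    show "\<exists>V V' p P. (\<forall>t\<in>{t0..t0 + T / real L}.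
            (V has_vector_derivative V' t) (at t within {t0..t0 + T / real L})
          \<and> (\<forall>y. norm (app (V' t - (f1 t *\<^sub>R K1 + f2 t *\<^sub>R K2) * V t) y) \<le> p t * norm y)
          \<and> (P has_real_derivative p t) (at t within {t0..t0 + T / real L}))
        \<and> V t0 = 1 \<and> V (t0 + T / real L) = em (Us1 f1 f2 H1 H2 (T / real L) t0)
        \<and> P (t0 + T / real L) - P t0 \<le> as1 * (T / real L)\<^sup>2"
      by (rule ex_step_cong[OF s1_step[OF sk1 sk2 a0 hp b0 d1 d2 bM1 bD1 bM2 bD2 n1 n2 cc12]])
         (simp_all add: em_Us1 K1_def K2_def as1e)
  qed (use dU skG in auto)
  have F1: "real L * (as1 * (T / real L)\<^sup>2) = as1 * T^2 / real L"
    using Lp by (simp add: power2_eq_square field_simps)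
  have bs1p: "0 \<le> beta_s1 T f1 f1' f1'' f2 f2' f2'' H1 H2 * T^3 / (real L)^2"
    unfolding beta_s1_def M1_def[symmetric] D2_def[symmetric] using pM1 pD2 nn T0 by simp
  have C1: "opn (stepprod (Us1 f1 f2 H1 H2 (T / real L)) (T / real L) L - U T)
       \<le> alpha_s1 T f1 f1' f1'' f2 f2' f2'' H1 H2 * T^2 / real L
         + beta_s1 T f1 f1' f1'' f2 f2' f2'' H1 H2 * T^3 / (real L)^2"
    using R1 F1 bs1p unfolding as1_def by linarith
  define ag1 where "ag1 = alpha_g1 T f1 f1' f1'' f2 f2' f2'' H1 H2"
  have ag1e: "ag1 = M1 * M2 * opn (comm H1 H2) / 2"
    unfolding ag1_def alpha_g1_def M1_def M2_def by (simp add: field_simps)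
  have ag1p: "0 \<le> ag1" unfolding ag1e using pM1 pM2 nn by simp
  have R2: "opn (stepprod (Ug1 f1 f2 H1 H2 (T / real L)) (T / real L) L - U T) \<le> real L * (ag1 * (T / real L)\<^sup>2)"
  proof (rule finish[where G="\<lambda>t. f1 t *\<^sub>R K1 + f2 t *\<^sub>R K2"])
    show "1 \<le> L" "0 < T" by (rule L_ge, rule T_pos)
    show "0 \<le> ag1 * (T / real L)\<^sup>2" using ag1p hp2 by simp
    show "U 0 = mat 1" by (rule U0)
    show "isom (em (Ug1 f1 f2 H1 H2 (T / real L) t))" for t by (rule isG1)
    fix t0 assume a0: "0 \<le> t0" and b0: "t0 + T / real L \<le> T"
    show "\<exists>V V' p P. (\<forall>t\<in>{t0..t0 + T / real L}.
            (V has_vector_derivative V' t) (at t within {t0..t0 + T / real L})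
          \<and> (\<forall>y. norm (app (V' t - (f1 t *\<^sub>R K1 + f2 t *\<^sub>R K2) * V t) y) \<le> p t * norm y)
          \<and> (P has_real_derivative p t) (at t within {t0..t0 + T / real L}))
        \<and> V t0 = 1 \<and> V (t0 + T / real L) = em (Ug1 f1 f2 H1 H2 (T / real L) t0)
        \<and> P (t0 + T / real L) - P t0 \<le> ag1 * (T / real L)\<^sup>2"
      by (rule ex_step_cong[OF g1_step[OF sk1 sk2 a0 hp b0 cf1 cf2 bM1 bM2 cc12]])
         (simp_all add: em_Ug1 K1_def K2_def ag1e)
  qed (use dU skG in auto)
  have F2: "real L * (ag1 * (T / real L)\<^sup>2) = ag1 * T^2 / real L"
    using Lp by (simp add: power2_eq_square field_simps)
  have C2: "opn (stepprod (Ug1 f1 f2 H1 H2 (T / real L)) (T / real L) L - U T)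
       \<le> alpha_g1 T f1 f1' f1'' f2 f2' f2'' H1 H2 * T^2 / real L"
    using R2 F2 unfolding ag1_def by linarith
  define c12 where "c12 = opn (comm H1 H2)"
  define c112 where "c112 = opn (comm H1 (comm H1 H2))"
  define c212 where "c212 = opn (comm H2 (comm H1 H2))"
  define c221 where "c221 = opn (comm H2 (comm H2 H1))"
  define as2 where "as2 = alpha_s2 T f1 f1' f1'' f2 f2' f2'' H1 H2"
  define os2 where "os2 = (Q1 * opn H1 / 8 + Q2 * opn H2 / 8 + M1 * D2 * c12 / 4 + M1 * M2\<^sup>2 * c212 / 4
                                 + D1 * M2 * c12 / 4 + M1\<^sup>2 * M2 * c112 / 8) / 3"
  have as2e: "as2 = os2 + (1/4 * (Q1 * opn H1) + 1/12 * (D1 * M2 * opn H1) + 1/4 * (Q2 * opn H2)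
                   + 1/12 * (D1 * M2 * c12) + 1/12 * (M1 * D2 * c12))"
    unfolding as2_def alpha_s2_def os2_def M1_def M2_def D1_def D2_def Q1_def Q2_def c12_def c112_def c212_def
    by (simp add: field_simps)
  have os2p: "0 \<le> os2" unfolding os2_def c12_def c112_def c212_def using pM1 pM2 pD1 pD2 pQ1 pQ2 nn by simp
  have os2le: "os2 \<le> as2" unfolding as2e c12_def using pM1 pM2 pD1 pD2 pQ1 pQ2 nn by simp
  have R3: "opn (stepprod (Us2 f1 f2 H1 H2 (T / real L)) (T / real L) L - U T) \<le> real L * (as2 * (T / real L) ^ 3)"
  proof (rule finish[where G="\<lambda>t. f1 t *\<^sub>R K1 + f2 t *\<^sub>R K2"])
    show "1 \<le> L" "0 < T" by (rule L_ge, rule T_pos)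
    show "0 \<le> as2 * (T / real L) ^ 3" using os2p os2le hp3 by simp
    show "U 0 = mat 1" by (rule U0)
    show "isom (em (Us2 f1 f2 H1 H2 (T / real L) t))" for t by (rule isS2)
    fix t0 assume a0: "0 \<le> t0" and b0: "t0 + T / real L \<le> T"
    show "\<exists>V V' p P. (\<forall>t\<in>{t0..t0 + T / real L}.
            (V has_vector_derivative V' t) (at t within {t0..t0 + T / real L})
          \<and> (\<forall>y. norm (app (V' t - (f1 t *\<^sub>R K1 + f2 t *\<^sub>R K2) * V t) y) \<le> p t * norm y)
          \<and> (P has_real_derivative p t) (at t within {t0..t0 + T / real L}))
        \<and> V t0 = 1 \<and> V (t0 + T / real L) = em (Us2 f1 f2 H1 H2 (T / real L) t0)
        \<and> P (t0 + T / real L) - P t0 \<le> as2 * (T / real L) ^ 3"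
    proof (rule ex_step_cong[OF s2_step[OF sk1 sk2 a0 hp b0 d1 d1' d2 d2' bM1 bD1 bQ1 bM2 bD2 bQ2 n1 n2 cc12 cc112 cc221b]])
      show "exp ((T / real L / 2 * f1 (t0 + T / real L / 2)) *\<^sub>R K1) * exp ((T / real L * f2 (t0 + T / real L / 2)) *\<^sub>R K2) *
            exp ((T / real L / 2 * f1 (t0 + T / real L / 2)) *\<^sub>R K1) = em (Us2 f1 f2 H1 H2 (T / real L) t0)"
        by (simp add: em_Us2 K1_def K2_def)
      have "(Q1 * opn H1 / 8 + Q2 * opn H2 / 8 + M1 * D2 * opn (comm H1 H2) / 4 + M1 * M2\<^sup>2 * opn (comm H2 (comm H1 H2)) / 4 +
          D1 * M2 * opn (comm H1 H2) / 4 + M1\<^sup>2 * M2 * opn (comm H1 (comm H1 H2)) / 8) / 3 = os2"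
        unfolding os2_def c12_def c112_def c212_def ..
      thus "(Q1 * opn H1 / 8 + Q2 * opn H2 / 8 + M1 * D2 * opn (comm H1 H2) / 4 + M1 * M2\<^sup>2 * opn (comm H2 (comm H1 H2)) / 4 +
          D1 * M2 * opn (comm H1 H2) / 4 + M1\<^sup>2 * M2 * opn (comm H1 (comm H1 H2)) / 8) / 3 * (T / real L) ^ 3
          \<le> as2 * (T / real L) ^ 3"
        using os2le hp3 by (simp add: mult_right_mono)
    qed
  qed (use dU skG in auto)
  have F3: "real L * (as2 * (T / real L) ^ 3) = as2 * T^3 / (real L)^2"
    using Lp by (simp add: power2_eq_square power3_eq_cube field_simps)
  have bs2p: "0 \<le> beta_s2 T f1 f1' f1'' f2 f2' f2'' H1 H2 * T^4 / (real L)^3"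
    unfolding beta_s2_def M1_def[symmetric] M2_def[symmetric] D1_def[symmetric] D2_def[symmetric]
      Q1_def[symmetric] Q2_def[symmetric]
    using pM1 pM2 pD1 pD2 pQ1 pQ2 nn T0 Lp by simp
  have gs2p: "0 \<le> gamma_s2 T f1 f1' f1'' f2 f2' f2'' H1 H2 * T^5 / (real L)^4"
    unfolding gamma_s2_def M1_def[symmetric] M2_def[symmetric] D1_def[symmetric] D2_def[symmetric]
    using pM1 pM2 pD1 pD2 nn T0 Lp by simp
  have C3: "opn (stepprod (Us2 f1 f2 H1 H2 (T / real L)) (T / real L) L - U T)
       \<le> alpha_s2 T f1 f1' f1'' f2 f2' f2'' H1 H2 * T^3 / (real L)^2
         + beta_s2 T f1 f1' f1'' f2 f2' f2'' H1 H2 * T^4 / (real L)^3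
         + gamma_s2 T f1 f1' f1'' f2 f2' f2'' H1 H2 * T^5 / (real L)^4"
    using R3 F3 bs2p gs2p unfolding as2_def by linarith
  define ag2 where "ag2 = alpha_g2 T f1 f1' f1'' f2 f2' f2'' H1 H2"
  define og2 where "og2 = (M1 * D2 * c12 / 4 + D1 * M2 * c12 / 8 + M1 * M2\<^sup>2 * c221 / 4
                                 + M1\<^sup>2 * M2 * c112 / 8) / 3"
  have ag2e: "ag2 = og2 + (1/2 * (M1 * D2 * c12) + 5/12 * (D1 * M2 * c12) + 1/3 * (M1\<^sup>2 * M2 * c112))"
    unfolding ag2_def alpha_g2_def og2_def M1_def M2_def D1_def D2_def c12_def c112_def c221_def
    by (simp add: field_simps)
  have og2p: "0 \<le> og2" unfolding og2_def c12_def c112_def c221_def using pM1 pM2 pD1 pD2 nn by simp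
  have og2le: "og2 \<le> ag2" unfolding ag2e c12_def c112_def using pM1 pM2 pD1 pD2 nn by simp
  have R4: "opn (stepprod (Ug2 f1 f2 H1 H2 (T / real L)) (T / real L) L - U T) \<le> real L * (ag2 * (T / real L) ^ 3)"
  proof (rule finish[where G="\<lambda>t. f1 t *\<^sub>R K1 + f2 t *\<^sub>R K2"])
    show "1 \<le> L" "0 < T" by (rule L_ge, rule T_pos)
    show "0 \<le> ag2 * (T / real L) ^ 3" using og2p og2le hp3 by simp
    show "U 0 = mat 1" by (rule U0)
    show "isom (em (Ug2 f1 f2 H1 H2 (T / real L) t))" for t by (rule isG2)
    fix t0 assume a0: "0 \<le> t0" and b0: "t0 + T / real L \<le> T"
    show "\<exists>V V' p P. (\<forall>t\<in>{t0..t0 + T / real L}.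
            (V has_vector_derivative V' t) (at t within {t0..t0 + T / real L})
          \<and> (\<forall>y. norm (app (V' t - (f1 t *\<^sub>R K1 + f2 t *\<^sub>R K2) * V t) y) \<le> p t * norm y)
          \<and> (P has_real_derivative p t) (at t within {t0..t0 + T / real L}))
        \<and> V t0 = 1 \<and> V (t0 + T / real L) = em (Ug2 f1 f2 H1 H2 (T / real L) t0)
        \<and> P (t0 + T / real L) - P t0 \<le> ag2 * (T / real L) ^ 3"
    proof (rule ex_step_cong[OF g2_step[OF sk1 sk2 a0 hp b0 cf1 cf2 d1 d2 bM1 bD1 bM2 bD2 cc12 cc112 cc221a]])
      show "exp (integral {t0 + T / real L / 2..t0 + T / real L} f1 *\<^sub>R K1) * exp (integral {t0..t0 + T / real L} f2 *\<^sub>R K2) *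
            exp (integral {t0..t0 + T / real L / 2} f1 *\<^sub>R K1) = em (Ug2 f1 f2 H1 H2 (T / real L) t0)"
        by (simp add: em_Ug2 K1_def K2_def)
      have "(M1 * D2 * opn (comm H1 H2) / 4 + D1 * M2 * opn (comm H1 H2) / 8 + M1 * M2\<^sup>2 * opn (comm H2 (comm H2 H1)) / 4 +
          M1\<^sup>2 * M2 * opn (comm H1 (comm H1 H2)) / 8) / 3 = og2"
        unfolding og2_def c12_def c112_def c221_def ..
      thus "(M1 * D2 * opn (comm H1 H2) / 4 + D1 * M2 * opn (comm H1 H2) / 8 + M1 * M2\<^sup>2 * opn (comm H2 (comm H2 H1)) / 4 +
          M1\<^sup>2 * M2 * opn (comm H1 (comm H1 H2)) / 8) / 3 * (T / real L) ^ 3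
          \<le> ag2 * (T / real L) ^ 3"
        using og2le hp3 by (simp add: mult_right_mono)
    qed
  qed (use dU skG in auto)
  have F4: "real L * (ag2 * (T / real L) ^ 3) = ag2 * T^3 / (real L)^2"
    using Lp by (simp add: power2_eq_square power3_eq_cube field_simps)
  have C4: "opn (stepprod (Ug2 f1 f2 H1 H2 (T / real L)) (T / real L) L - U T)
       \<le> alpha_g2 T f1 f1' f1'' f2 f2' f2'' H1 H2 * T^3 / (real L)^2"
    using R4 F4 unfolding ag2_def by linarith
  show ?thesis using C1 C2 C3 C4 by blast
qed

end
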